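(* In the setup below, with the $a_i,b_i,c_{i,j}$ fixed, $$\lim_{t\to0}\frac{\det\bigl(\langle\gamma_{s,t},\alpha_j\rangle\bigr)_{s\in S,\,1\le j\le g}}{\log^g|t|}=\pm1,$$ where $\alpha_1,\dots,\alpha_g$ are the elements $R(1;1,j|2;1,m)$ ($1<j\le N_1$, $1<m\le N_2$), $T(1,1|k,l|m,n)$ ($2\le k<m\le N$, $1\le l\le N_k$, $1\le n\le N_m$), $T(1,j|2,1|m,n)$ ($2\le j\le N_1$, $3\le m\le N$, $1\le n\le N_m$) of $K_2^T(X_t)$.
   Context: Let $N\ge2$, $N_i\ge1$, and $L_{i,j}=a_ix+b_iy+c_{i,j}$ ($1\le i\le N$, $1\le j\le N_i$) complex non-constant polynomials defining pairwise distinct lines, with $[i,k]:=a_ib_k-a_kb_i\ne0$ for $i\ne k$; assume no three of the lines $L_{i,j}=0$ meet in an affine point. For $t\in\mathbb C$ let $X_t$ be the normalisation of the projective closure of $\prod_{i,j}L_{i,j}=t$; for $t\ne0$ small it is a smooth compact Riemann surface of genus $g=\sum_{i<k}N_iN_k-\sum_iN_i+1$. In its function field, $R(i;j,k|l;m,n)=\{L_{i,j}/L_{i,k},L_{l,m}/L_{l,n}\}$ ($i\ne l$) and $T(i,j|k,l|m,n)=\bigl\{\frac{[i,m]}{[k,m]}\frac{L_{k,l}}{L_{i,j}},\frac{[i,k]}{[m,k]}\frac{L_{m,n}}{L_{i,j}}\bigr\}$ ($i,k,m$ distinct) are elements of $K_2^T(X_t)$ (kernel of all tame symbols). Regulator pairing: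 $\langle\gamma,\alpha\rangle=\frac1{2\pi}\int_\gamma\eta(\alpha)$, where $\eta$ is extended additively from $\eta(\{a,b\})=\log|a|\,d\arg b-\log|b|\,d\arg a$, for loops $\gamma$ avoiding zeroes and poles. Let $P_{i,j;k,l}$ be the intersection point of $L_{i,j}=0$ and $L_{k,l}=0$, $S=\{P_{i,j;k,l}:1\le i<k\le N,(i,j)\ne(1,1),(i,k,l)\ne(1,2,1)\}$ ($g$ elements). Loops: choose coordinates such that $x$-projection of $X_0$ is unramified away from intersection points and distinct intersection points have distinct $x$-coordinates; for $s$ an intersection point, a line $L$ through $s$ and a small circle $\gamma'$ around the $x$-coordinate of $s$, $\gamma_{s,0}$ is the lift of $\gamma'$ into $L$ and $\gamma_{s,t}\subset X_t$ is its continuous deformation lifting $\gamma'$ for small $t$ (a closed loop near $s$). *)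

theory Defs
  imports "HOL-Analysis.Analysis" "Jordan_Normal_Form.Determinant"
begin

text \<open>Points of the affine plane C^2 are pairs (x,y). The lines are indexed 1-based:
  group i in 1..N, member j in 1..Nn i.\<close>

type_synonym pt = "complex \<times> complex"

definition Lf :: "(nat \<Rightarrow> complex) \<Rightarrow> (nat \<Rightarrow> complex) \<Rightarrow> (nat \<Rightarrow> nat \<Rightarrow> complex)
    \<Rightarrow> nat \<Rightarrow> nat \<Rightarrow> pt \<Rightarrow> complex" where
  "Lf a b c i j p = a i * fst p + b i * snd p + c i j"

definition br :: "(nat \<Rightarrow> complex) \<Rightarrow> (nat \<Rightarrow> complex) \<Rightarrow> nat \<Rightarrow> nat \<Rightarrow> complex" where
  "br a b i k = a i * b k - a k * b i"

text \<open>intersection point P_{i,j;k,l} of L_{i,j}=0 and L_{k,l}=0 (Cramer's rule, i, k distinct)\<close>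
definition Pt :: "(nat \<Rightarrow> complex) \<Rightarrow> (nat \<Rightarrow> complex) \<Rightarrow> (nat \<Rightarrow> nat \<Rightarrow> complex)
    \<Rightarrow> nat \<Rightarrow> nat \<Rightarrow> nat \<Rightarrow> nat \<Rightarrow> pt" where
  "Pt a b c i j k l =
     ((b i * c k l - b k * c i j) / br a b i k, (a k * c i j - a i * c k l) / br a b i k)"

definition Fprod :: "(nat \<Rightarrow> complex) \<Rightarrow> (nat \<Rightarrow> complex) \<Rightarrow> (nat \<Rightarrow> nat \<Rightarrow> complex)
    \<Rightarrow> nat \<Rightarrow> (nat \<Rightarrow> nat) \<Rightarrow> pt \<Rightarrow> complex" where
  "Fprod a b c N Nn p = (\<Prod>i\<in>{1..N}. \<Prod>j\<in>{1..Nn i}. Lf a b c i j p)"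

type_synonym symb = "(pt \<Rightarrow> complex) \<times> (pt \<Rightarrow> complex)"

text \<open>Regulator pairing of a (piecewise smooth) loop gamma : [0,1] -> C^2 with a symbol {f,g}:
  (1/2pi) times the integral over the loop of log|f| d arg g - log|g| d arg f, where
  d arg h along the loop is Im((h o gamma)' / (h o gamma)) d theta.\<close>
definition pairing :: "(real \<Rightarrow> pt) \<Rightarrow> symb \<Rightarrow> real" where
  "pairing \<gamma> \<alpha> = (let f = fst \<alpha>; g = snd \<alpha> in
     integral {0..1} (\<lambda>\<theta>.
        ln (cmod (f (\<gamma> \<theta>))) *
          Im (vector_derivative (\<lambda>u. g (\<gamma> u)) (at \<theta> within {0..1}) / g (\<gamma> \<theta>))
      - ln (cmod (g (\<gamma> \<theta>))) *
          Im (vector_derivative (\<lambda>u. f (\<gamma> u)) (at \<theta> within {0..1}) / f (\<gamma> \<theta>)))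
     / (2 * pi))"

definition Rsym :: "(nat \<Rightarrow> complex) \<Rightarrow> (nat \<Rightarrow> complex) \<Rightarrow> (nat \<Rightarrow> nat \<Rightarrow> complex)
    \<Rightarrow> nat \<Rightarrow> nat \<Rightarrow> nat \<Rightarrow> nat \<Rightarrow> nat \<Rightarrow> nat \<Rightarrow> symb" where
  "Rsym a b c i j k l m n =
     (\<lambda>p. Lf a b c i j p / Lf a b c i k p, \<lambda>p. Lf a b c l m p / Lf a b c l n p)"

definition Tsym :: "(nat \<Rightarrow> complex) \<Rightarrow> (nat \<Rightarrow> complex) \<Rightarrow> (nat \<Rightarrow> nat \<Rightarrow> complex)
    \<Rightarrow> nat \<Rightarrow> nat \<Rightarrow> nat \<Rightarrow> nat \<Rightarrow> nat \<Rightarrow> nat \<Rightarrow> symb" where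
  "Tsym a b c i j k l m n =
     (\<lambda>p. br a b i m / br a b k m * Lf a b c k l p / Lf a b c i j p,
      \<lambda>p. br a b i k / br a b m k * Lf a b c m n p / Lf a b c i j p)"

text \<open>Labels of the elements alpha_1..alpha_g: RT j m stands for R(1;1,j|2;1,m),
  TT i j k l m n stands for T(i,j|k,l|m,n).\<close>
datatype atag = RT nat nat | TT nat nat nat nat nat nat

fun alpha_of :: "(nat \<Rightarrow> complex) \<Rightarrow> (nat \<Rightarrow> complex) \<Rightarrow> (nat \<Rightarrow> nat \<Rightarrow> complex)
    \<Rightarrow> atag \<Rightarrow> symb" where
  "alpha_of a b c (RT j m) = Rsym a b c 1 1 j 2 1 m"
| "alpha_of a b c (TT i j k l m n) = Tsym a b c i j k l m n"

definition alpha_tags :: "nat \<Rightarrow> (nat \<Rightarrow> nat) \<Rightarrow> atag set" where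
  "alpha_tags N Nn =
     {RT j m | j m. 1 < j \<and> j \<le> Nn 1 \<and> 1 < m \<and> m \<le> Nn 2}
   \<union> {TT 1 1 k l m n | k l m n. 2 \<le> k \<and> k < m \<and> m \<le> N \<and> 1 \<le> l \<and> l \<le> Nn k
        \<and> 1 \<le> n \<and> n \<le> Nn m}
   \<union> {TT 1 j 2 1 m n | j m n. 2 \<le> j \<and> j \<le> Nn 1 \<and> 3 \<le> m \<and> m \<le> N
        \<and> 1 \<le> n \<and> n \<le> Nn m}"

text \<open>Index tuples (i,j,k,l) of the points of S; the point is Pt a b c i j k l.
  Since no three lines are concurrent, distinct tuples give distinct points.\<close>
definition S_idx :: "nat \<Rightarrow> (nat \<Rightarrow> nat) \<Rightarrow> (nat \<times> nat \<times> nat \<times> nat) set" where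
  "S_idx N Nn = {(i,j,k,l). 1 \<le> i \<and> i < k \<and> k \<le> N \<and> 1 \<le> j \<and> j \<le> Nn i
      \<and> 1 \<le> l \<and> l \<le> Nn k \<and> (i,j) \<noteq> (1,1) \<and> (i,k,l) \<noteq> (1,2,1)}"

definition all_pts :: "(nat \<Rightarrow> complex) \<Rightarrow> (nat \<Rightarrow> complex) \<Rightarrow> (nat \<Rightarrow> nat \<Rightarrow> complex)
    \<Rightarrow> nat \<Rightarrow> (nat \<Rightarrow> nat) \<Rightarrow> pt set" where
  "all_pts a b c N Nn = {Pt a b c i j k l | i j k l. i \<in> {1..N} \<and> k \<in> {1..N} \<and> i \<noteq> k
      \<and> j \<in> {1..Nn i} \<and> l \<in> {1..Nn k}}"

definition genus :: "nat \<Rightarrow> (nat \<Rightarrow> nat) \<Rightarrow> nat" where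
  "genus N Nn = (\<Sum>k\<in>{1..N}. \<Sum>i\<in>{1..<k}. Nn i * Nn k) + 1 - (\<Sum>i\<in>{1..N}. Nn i)"

end

theory Submission
  imports Defs "HOL-Complex_Analysis.Complex_Analysis"
begin


lemma unif_close:
  fixes F :: "complex \<Rightarrow> real \<Rightarrow> 'a::metric_space"
  assumes "\<delta> > 0" "continuous_on (cball 0 \<delta> \<times> {0..1}) (\<lambda>(t,\<theta>). F t \<theta>)" "e > 0"
  shows "\<forall>\<^sub>F t in at 0. t \<in> cball 0 \<delta> \<and> (\<forall>\<theta>\<in>{0..1}. dist (F t \<theta>) (F 0 \<theta>) < e)"
proof -
  have "compact (cball (0::complex) \<delta> \<times> {0..(1::real)})"
    by (intro compact_Times) auto
  then have "uniformly_continuous_on (cball 0 \<delta> \<times> {0..1}) (\<lambda>(t,\<theta>). F t \<theta>)"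
    using assms(2) compact_uniformly_continuous by blast
  then obtain d where d: "d > 0" and
    dd: "\<And>x x'. x \<in> cball 0 \<delta> \<times> {0..1} \<Longrightarrow> x' \<in> cball 0 \<delta> \<times> {0..1} \<Longrightarrow> dist x' x < d
        \<Longrightarrow> dist ((\<lambda>(t,\<theta>). F t \<theta>) x') ((\<lambda>(t,\<theta>). F t \<theta>) x) < e"
    unfolding uniformly_continuous_on_def using assms(3) by metis
  show ?thesis unfolding eventually_at
  proof (intro exI[of _ "min d \<delta>"] conjI allI impI ballI)
    show "min d \<delta> > 0" using d assms(1) by simp
    fix t :: complex assume t: "t \<noteq> 0 \<and> dist t 0 < min d \<delta>"
    then show "t \<in> cball 0 \<delta>" by (simp add: dist_norm)
    fix \<theta> :: real assume th: "\<theta> \<in> {0..1}"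
    have "dist (t,\<theta>) (0,\<theta>) = dist t 0" by (simp add: dist_Pair_Pair)
    then show "dist (F t \<theta>) (F 0 \<theta>) < e"
      using dd[of "(0,\<theta>)" "(t,\<theta>)"] t th assms(1) by (auto simp: dist_norm)
  qed
qed

lemma cont_slice:
  fixes F :: "complex \<Rightarrow> real \<Rightarrow> 'a::topological_space"
  assumes "continuous_on (cball 0 \<delta> \<times> {0..1}) (\<lambda>(t,\<theta>). F t \<theta>)" "t \<in> cball 0 \<delta>"
  shows "continuous_on {0..1} (F t)"
proof -
  have "continuous_on {0..1} ((\<lambda>(t,\<theta>). F t \<theta>) \<circ> (\<lambda>\<theta>. (t,\<theta>)))"
    by (rule continuous_on_compose[OF _ continuous_on_subset[OF assms(1)]])
       (use assms(2) in \<open>auto intro!: continuous_intros\<close>)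
  then show ?thesis by (simp add: o_def)
qed

lemma wind_integral:
  fixes K K' :: "complex \<Rightarrow> real \<Rightarrow> complex"
  assumes d: "\<delta> > 0" and cont: "continuous_on (cball 0 \<delta> \<times> {0..1}) (\<lambda>(t,\<theta>). K t \<theta>)"
    and nz: "\<forall>\<theta>\<in>{0..1}. K 0 \<theta> \<noteq> 0"
    and loop: "\<forall>t\<in>cball 0 \<delta>. K t 0 = K t 1"
    and der: "\<forall>t\<in>cball 0 \<delta> - {0}. \<forall>\<theta>\<in>{0..1}. (K t has_vector_derivative K' t \<theta>) (at \<theta>)"
    and dcont: "\<forall>t\<in>cball 0 \<delta> - {0}. continuous_on {0..1} (K' t)"
  shows "\<forall>\<^sub>F t in at 0. integral {0..1} (\<lambda>\<theta>. K' t \<theta> / K t \<theta>) = 2*pi*\<i>*winding_number (K 0) 0"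
proof -
  have c0: "continuous_on {0..1} (K 0)" using cont_slice[OF cont] d by simp
  have "compact (K 0 ` {0..1})" using c0 compact_continuous_image by blast
  moreover have "K 0 ` {0..1} \<noteq> {}" by auto
  ultimately obtain z where z: "z \<in> K 0 ` {0..1}" and zmin: "\<forall>w\<in>K 0 ` {0..1}. norm z \<le> norm w"
    using continuous_attains_inf[of "K 0 ` {0..1}" norm] continuous_on_norm_id by blast
  define m where "m = norm z"
  have mpos: "m > 0" using z nz m_def by auto
  have mle: "\<And>\<theta>. \<theta> \<in> {0..1} \<Longrightarrow> m \<le> norm (K 0 \<theta>)" using zmin m_def by auto
  have ev: "\<forall>\<^sub>F t in at 0. t \<in> cball 0 \<delta> \<and> (\<forall>\<theta>\<in>{0..1}. dist (K t \<theta>) (K 0 \<theta>) < m)"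
    by (rule unif_close[OF d cont mpos])
  have ev2: "\<forall>\<^sub>F t in at (0::complex). t \<noteq> 0" by (auto simp: eventually_at intro!: exI[of _ 1])
  show ?thesis using eventually_conj[OF ev ev2]
  proof (rule eventually_mono, clarify)
    fix t assume tb: "t \<in> cball 0 \<delta>" and cl: "\<forall>\<theta>\<in>{0..1}. dist (K t \<theta>) (K 0 \<theta>) < m" and t0: "t \<noteq> 0"
    have ct: "continuous_on {0..1} (K t)" using cont_slice[OF cont tb] .
    have near: "\<And>\<theta>. \<theta> \<in> {0..1} \<Longrightarrow> norm (K t \<theta> - K 0 \<theta>) < norm (K 0 \<theta> - 0)"
      using cl mle by (force simp: dist_norm)
    have wn: "winding_number (K t) 0 = winding_number (K 0) 0"
      apply (rule winding_number_nearby_loops_eq)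
      using c0 ct loop tb d near by (auto simp: path_def pathstart_def pathfinish_def)
    have C1: "K t C1_differentiable_on {0..1}"
      unfolding C1_differentiable_on_def using der dcont tb t0 by blast
    have vp: "valid_path (K t)" unfolding valid_path_def
      using C1 C1_differentiable_imp_piecewise by blast
    have ni: "0 \<notin> path_image (K t)"
    proof
      assume "0 \<in> path_image (K t)"
      then obtain \<theta> where "\<theta> \<in> {0..1}" "K t \<theta> = 0" by (auto simp: path_image_def)
      then show False using near[of \<theta>] by simp
    qed
    have hc: "((\<lambda>w. 1/(w - 0)) has_contour_integral (2*pi*\<i>*winding_number (K t) 0)) (K t)"
      by (rule has_contour_integral_winding_number[OF vp ni])
    then have hi: "((\<lambda>x. 1/(K t x - 0) * vector_derivative (K t) (at x within {0..1})) has_integral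
                  (2*pi*\<i>*winding_number (K t) 0)) {0..1}"
      unfolding has_contour_integral_def .
    have eq: "\<And>x. x \<in> {0..1} \<Longrightarrow> 1/(K t x - 0) * vector_derivative (K t) (at x within {0..1}) = K' t x / K t x"
    proof -
      fix x :: real assume x: "x \<in> {0..1}"
      have "(K t has_vector_derivative K' t x) (at x within {0..1})"
        using der tb t0 x has_vector_derivative_at_within by blast
      then have "vector_derivative (K t) (at x within {0..1}) = K' t x"
        using vector_derivative_within_closed_interval[of 0 1 x] x by auto
      then show "1/(K t x - 0) * vector_derivative (K t) (at x within {0..1}) = K' t x / K t x" by simp
    qed
    have "((\<lambda>x. K' t x / K t x) has_integral (2*pi*\<i>*winding_number (K t) 0)) {0..1}"
      using hi eq by (metis (mono_tags, lifting) has_integral_eq)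
    then show "integral {0..1} (\<lambda>\<theta>. K' t \<theta> / K t \<theta>) = 2*pi*\<i>*winding_number (K 0) 0"
      using wn integral_unique by metis
  qed
qed


definition LL :: "(nat \<Rightarrow> complex) \<Rightarrow> (nat \<Rightarrow> complex) \<Rightarrow> (nat \<Rightarrow> nat \<Rightarrow> complex) \<Rightarrow> nat \<times> nat \<Rightarrow> pt \<Rightarrow> complex" where
  "LL a b c X p = Lf a b c (fst X) (snd X) p"

lemma vd_fst:
  assumes "(f has_vector_derivative D) F"
  shows "((\<lambda>u. fst (f u)) has_vector_derivative fst D) F"
  using has_derivative_fst[OF assms[unfolded has_vector_derivative_def]]
  by (simp add: has_vector_derivative_def)

lemma vd_snd:
  assumes "(f has_vector_derivative D) F"
  shows "((\<lambda>u. snd (f u)) has_vector_derivative snd D) F"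
  using has_derivative_snd[OF assms[unfolded has_vector_derivative_def]]
  by (simp add: has_vector_derivative_def)

lemma vd_LL:
  assumes "(f has_vector_derivative D) F"
  shows "((\<lambda>u. LL a b c X (f u)) has_vector_derivative a (fst X) * fst D + b (fst X) * snd D) F"
proof -
  have "((\<lambda>u. a (fst X) * fst (f u) + b (fst X) * snd (f u) + c (fst X) (snd X)) has_vector_derivative
      a (fst X) * fst D + b (fst X) * snd D + 0) F"
    by (intro has_vector_derivative_add has_vector_derivative_mult_right vd_fst vd_snd assms
      has_vector_derivative_const)
  then show ?thesis unfolding LL_def Lf_def by simp
qed

lemma Pt_zero:
  assumes "br a b i k \<noteq> 0"
  shows "Lf a b c i j (Pt a b c i j k l) = 0" "Lf a b c k l (Pt a b c i j k l) = 0"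
proof -
  define D where "D = br a b i k"
  have D: "D \<noteq> 0" using assms D_def by simp
  have "Lf a b c i j (Pt a b c i j k l) = (a i * (b i * c k l - b k * c i j) + b i * (a k * c i j - a i * c k l) + c i j * D) / D"
    unfolding Lf_def Pt_def D_def[symmetric] using D by (simp add: field_simps)
  also have "a i * (b i * c k l - b k * c i j) + b i * (a k * c i j - a i * c k l) + c i j * D = 0"
    unfolding D_def br_def by (simp add: algebra_simps)
  finally show "Lf a b c i j (Pt a b c i j k l) = 0" by simp
  have "Lf a b c k l (Pt a b c i j k l) = (a k * (b i * c k l - b k * c i j) + b k * (a k * c i j - a i * c k l) + c k l * D) / D"
    unfolding Lf_def Pt_def D_def[symmetric] using D by (simp add: field_simps)
  also have "a k * (b i * c k l - b k * c i j) + b k * (a k * c i j - a i * c k l) + c k l * D = 0"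
    unfolding D_def br_def by (simp add: algebra_simps)
  finally show "Lf a b c k l (Pt a b c i j k l) = 0" by simp
qed

lemma LL_decomp:
  fixes Z X :: "nat \<times> nat"
  assumes d: "a (fst Z) * qr - b (fst Z) * pr \<noteq> 0"
  shows "LL a b c X p = ((a (fst X) * qr - b (fst X) * pr) / (a (fst Z) * qr - b (fst Z) * pr)) * LL a b c Z p
     + ((a (fst Z) * b (fst X) - b (fst Z) * a (fst X)) / (a (fst Z) * qr - b (fst Z) * pr)) * (pr * fst p + qr * snd p)
     + (c (fst X) (snd X) - ((a (fst X) * qr - b (fst X) * pr) / (a (fst Z) * qr - b (fst Z) * pr)) * c (fst Z) (snd Z))"
proof -
  define D where "D = a (fst Z) * qr - b (fst Z) * pr"
  have D: "D \<noteq> 0" using d D_def by simp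
  have "(((a (fst X) * qr - b (fst X) * pr) / D) * LL a b c Z p
     + ((a (fst Z) * b (fst X) - b (fst Z) * a (fst X)) / D) * (pr * fst p + qr * snd p)
     + (c (fst X) (snd X) - ((a (fst X) * qr - b (fst X) * pr) / D) * c (fst Z) (snd Z))) * D
     = (a (fst X) * qr - b (fst X) * pr) * LL a b c Z p
     + (a (fst Z) * b (fst X) - b (fst Z) * a (fst X)) * (pr * fst p + qr * snd p)
     + (c (fst X) (snd X) * D - (a (fst X) * qr - b (fst X) * pr) * c (fst Z) (snd Z))"
    using D by (simp add: field_simps)
  also have "\<dots> = LL a b c X p * D"
    unfolding D_def LL_def Lf_def by (simp add: algebra_simps)
  finally show ?thesis using D unfolding D_def[symmetric] by (metis mult_cancel_right)
qed


definition muf :: "(nat \<Rightarrow> complex) \<Rightarrow> (nat \<Rightarrow> complex) \<Rightarrow> complex \<Rightarrow> complex \<Rightarrow> nat \<times> nat \<Rightarrow> nat \<times> nat \<Rightarrow> complex" where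
  "muf a b pr qr Z X = (a (fst X) * qr - b (fst X) * pr) / (a (fst Z) * qr - b (fst Z) * pr)"
definition lamf :: "(nat \<Rightarrow> complex) \<Rightarrow> (nat \<Rightarrow> complex) \<Rightarrow> complex \<Rightarrow> complex \<Rightarrow> nat \<times> nat \<Rightarrow> nat \<times> nat \<Rightarrow> complex" where
  "lamf a b pr qr Z X = (a (fst Z) * b (fst X) - b (fst Z) * a (fst X)) / (a (fst Z) * qr - b (fst Z) * pr)"

locale loopctx =
  fixes a b :: "nat \<Rightarrow> complex" and c :: "nat \<Rightarrow> nat \<Rightarrow> complex"
    and I :: "(nat \<times> nat) set" and pr qr :: complex and r \<delta> :: real
    and \<gamma> :: "complex \<Rightarrow> real \<Rightarrow> pt" and Z Z' :: "nat \<times> nat" and P :: pt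
  assumes finI: "finite I" and ZI: "Z \<in> I" and Z'I: "Z' \<in> I" and ZZ': "Z \<noteq> Z'"
    and dpos: "\<delta> > 0" and rpos: "r > 0"
    and cont: "continuous_on (cball 0 \<delta> \<times> {0..1}) (\<lambda>(t,\<theta>). \<gamma> t \<theta>)"
    and circ: "\<forall>t\<in>cball 0 \<delta>. \<forall>\<theta>\<in>{0..1}. pr * fst (\<gamma> t \<theta>) + qr * snd (\<gamma> t \<theta>)
                 = pr * fst P + qr * snd P + complex_of_real r * cis (2*pi*\<theta>)"
    and Fp: "\<forall>t\<in>cball 0 \<delta>. \<forall>\<theta>\<in>{0..1}. (\<Prod>X\<in>I. LL a b c X (\<gamma> t \<theta>)) = t"
    and loop: "\<forall>t\<in>cball 0 \<delta>. \<gamma> t 0 = \<gamma> t 1"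
    and C1: "\<forall>t\<in>cball 0 \<delta> - {0}. \<gamma> t C1_differentiable_on {0..1}"
    and on0: "\<forall>\<theta>\<in>{0..1}. LL a b c Z (\<gamma> 0 \<theta>) = 0"
    and unram: "a (fst Z) * qr - b (fst Z) * pr \<noteq> 0"
    and PZ: "LL a b c Z P = 0" and PZ': "LL a b c Z' P = 0"
    and lamZ': "lamf a b pr qr Z Z' \<noteq> 0"
    and others: "\<forall>X\<in>I - {Z,Z'}. (lamf a b pr qr Z X = 0 \<and> LL a b c X P \<noteq> 0)
                   \<or> (lamf a b pr qr Z X \<noteq> 0 \<and> r < cmod (LL a b c X P / lamf a b pr qr Z X))"
begin

abbreviation "lam \<equiv> lamf a b pr qr Z"
abbreviation "mu \<equiv> muf a b pr qr Z"
definition "nu X = c (fst X) (snd X) - mu X * c (fst Z) (snd Z)"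
definition "piP = pr * fst P + qr * snd P"
definition h :: "nat \<times> nat \<Rightarrow> complex \<Rightarrow> real \<Rightarrow> complex" where "h X t \<theta> = LL a b c X (\<gamma> t \<theta>)"

lemma LL_dec: "LL a b c X p = mu X * LL a b c Z p + lam X * (pr * fst p + qr * snd p) + nu X"
  using LL_decomp[of a Z qr b pr c X p] unram unfolding muf_def lamf_def nu_def by simp

lemma LLP: "LL a b c X P = lam X * piP + nu X"
  using LL_dec[of X P] PZ unfolding piP_def by simp

lemma h0: "\<theta> \<in> {0..1} \<Longrightarrow> h X 0 \<theta> = LL a b c X P + lam X * r * cis (2*pi*\<theta>)"
proof -
  assume th: "\<theta> \<in> {0..1}"
  have "h X 0 \<theta> = lam X * (piP + r * cis (2*pi*\<theta>)) + nu X"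
    unfolding h_def using LL_dec[of X "\<gamma> 0 \<theta>"] on0 th circ dpos unfolding piP_def by auto
  then show ?thesis using LLP by (simp add: algebra_simps)
qed

lemma h0_nz: assumes "X \<in> I" "X \<noteq> Z" "\<theta> \<in> {0..1}" shows "h X 0 \<theta> \<noteq> 0"
proof (cases "X = Z'")
  case True
  then show ?thesis using h0[OF assms(3)] PZ' lamZ' rpos by simp
next
  case False
  then have XI: "X \<in> I - {Z,Z'}" using assms by auto
  show ?thesis
  proof (cases "lam X = 0")
    case True
    then show ?thesis using others XI h0[OF assms(3)] by auto
  next
    case False
    then have gt: "r < cmod (LL a b c X P / lam X)" using others XI by auto
    have "h X 0 \<theta> = lam X * (LL a b c X P / lam X + r * cis (2*pi*\<theta>))"
      using h0[OF assms(3)] False by (simp add: field_simps)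
    moreover have "LL a b c X P / lam X + r * cis (2*pi*\<theta>) \<noteq> 0"
    proof
      assume "LL a b c X P / lam X + r * cis (2*pi*\<theta>) = 0"
      then have "LL a b c X P / lam X = - (r * cis (2*pi*\<theta>))" by (simp add: eq_neg_iff_add_eq_0)
      then have "cmod (LL a b c X P / lam X) = r" using rpos by (simp add: norm_mult)
      then show False using gt by simp
    qed
    ultimately show ?thesis using False by simp
  qed
qed

lemma h_cont2: "continuous_on (cball 0 \<delta> \<times> {0..1}) (\<lambda>(t,\<theta>). h X t \<theta>)"
proof -
  have "continuous_on (cball 0 \<delta> \<times> {0..1}) ((LL a b c X) \<circ> (\<lambda>(t,\<theta>). \<gamma> t \<theta>))"
    by (rule continuous_on_compose[OF cont]) (auto simp: LL_def Lf_def intro!: continuous_intros)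
  then show ?thesis unfolding h_def o_def by (simp add: case_prod_unfold)
qed

lemma h_cont: "t \<in> cball 0 \<delta> \<Longrightarrow> continuous_on {0..1} (h X t)"
  using cont_slice[OF h_cont2] by blast

lemma h_nz: assumes "t \<in> cball 0 \<delta>" "t \<noteq> 0" "\<theta> \<in> {0..1}" "X \<in> I" shows "h X t \<theta> \<noteq> 0"
proof
  assume "h X t \<theta> = 0"
  then have "(\<Prod>X\<in>I. LL a b c X (\<gamma> t \<theta>)) = 0" using finI assms(4) unfolding h_def
    by (meson prod_zero_iff)
  then show False using Fp assms by auto
qed

definition Dg :: "complex \<Rightarrow> real \<Rightarrow> pt" where
  "Dg t = (SOME D. (\<forall>x\<in>{0..1}. (\<gamma> t has_vector_derivative D x) (at x)) \<and> continuous_on {0..1} D)"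

lemma Dg: assumes "t \<in> cball 0 \<delta>" "t \<noteq> 0"
  shows "\<forall>x\<in>{0..1}. (\<gamma> t has_vector_derivative Dg t x) (at x)" "continuous_on {0..1} (Dg t)"
proof -
  have "\<exists>D. (\<forall>x\<in>{0..1}. (\<gamma> t has_vector_derivative D x) (at x)) \<and> continuous_on {0..1} D"
    using C1 assms unfolding C1_differentiable_on_def by blast
  from someI_ex[OF this] show "\<forall>x\<in>{0..1}. (\<gamma> t has_vector_derivative Dg t x) (at x)" "continuous_on {0..1} (Dg t)"
    unfolding Dg_def by blast+
qed

definition hd :: "nat \<times> nat \<Rightarrow> complex \<Rightarrow> real \<Rightarrow> complex" where
  "hd X t \<theta> = a (fst X) * fst (Dg t \<theta>) + b (fst X) * snd (Dg t \<theta>)"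

lemma hd_has: assumes "t \<in> cball 0 \<delta>" "t \<noteq> 0" "\<theta> \<in> {0..1}"
  shows "(h X t has_vector_derivative hd X t \<theta>) (at \<theta>)"
  using vd_LL[OF Dg(1)[OF assms(1,2), rule_format, OF assms(3)], of a b c X]
  unfolding h_def hd_def by simp

lemma hd_cont: assumes "t \<in> cball 0 \<delta>" "t \<noteq> 0" shows "continuous_on {0..1} (hd X t)"
  unfolding hd_def using Dg(2)[OF assms] by (intro continuous_intros) auto

end

find_theorems name: has_vector_derivative_transform_within
lemma vd_unique01:
  fixes f g :: "real \<Rightarrow> complex"
  assumes "\<theta> \<in> {0..1}" "(f has_vector_derivative A) (at \<theta> within {0..1})"
    "(g has_vector_derivative B) (at \<theta> within {0..1})" "\<forall>u\<in>{0..1}. f u = g u"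
  shows "A = B"
proof -
  have "(g has_vector_derivative A) (at \<theta> within {0..1})"
    by (rule has_vector_derivative_transform_within[OF assms(2) _ assms(1), of 1]) (use assms(4) in auto)
  then have "vector_derivative g (at \<theta> within {0..1}) = A"
    using vector_derivative_within_closed_interval[of 0 1 \<theta>] assms(1) by auto
  moreover have "vector_derivative g (at \<theta> within {0..1}) = B"
    using vector_derivative_within_closed_interval[of 0 1 \<theta>] assms(1,3) by auto
  ultimately show ?thesis by simp
qed

context loopctx begin

lemma logder_sum: assumes t: "t \<in> cball 0 \<delta>" "t \<noteq> 0" and th: "\<theta> \<in> {0..1}"
  shows "(\<Sum>X\<in>I. hd X t \<theta> / h X t \<theta>) = 0"
proof -
  define V where "V = (\<Sum>X\<in>I. hd X t \<theta> * (\<Prod>Y\<in>I-{X}. h Y t \<theta>))"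
  have d1: "((\<lambda>u. \<Prod>X\<in>I. h X t u) has_derivative (\<lambda>y. \<Sum>X\<in>I. (y *\<^sub>R hd X t \<theta>) * (\<Prod>Y\<in>I-{X}. h Y t \<theta>))) (at \<theta> within {0..1})"
    apply (rule has_derivative_prod)
    using hd_has[OF t th] has_vector_derivative_at_within unfolding has_vector_derivative_def by blast
  have "(\<lambda>y. \<Sum>X\<in>I. (y *\<^sub>R hd X t \<theta>) * (\<Prod>Y\<in>I-{X}. h Y t \<theta>)) = (\<lambda>y. y *\<^sub>R V)"
    unfolding V_def by (auto simp: scaleR_conv_of_real sum_distrib_left mult.assoc)
  with d1 have d1': "((\<lambda>u. \<Prod>X\<in>I. h X t u) has_vector_derivative V) (at \<theta> within {0..1})"
    unfolding has_vector_derivative_def by simp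
  have d2: "((\<lambda>u. t) has_vector_derivative 0) (at \<theta> within {0..1})" by (rule has_vector_derivative_const)
  have eq: "\<forall>u\<in>{0..1}. (\<Prod>X\<in>I. h X t u) = t" using Fp t unfolding h_def by auto
  have V0: "V = 0" by (rule vd_unique01[OF th d1' d2 eq])
  have pn: "(\<Prod>X\<in>I. h X t \<theta>) = t" using eq th by auto
  have "(\<Sum>X\<in>I. hd X t \<theta> / h X t \<theta>) = V / t"
  proof -
    have "\<And>X. X \<in> I \<Longrightarrow> hd X t \<theta> / h X t \<theta> = hd X t \<theta> * (\<Prod>Y\<in>I-{X}. h Y t \<theta>) / t"
    proof -
      fix X assume X: "X \<in> I"
      have "t = h X t \<theta> * (\<Prod>Y\<in>I-{X}. h Y t \<theta>)" using pn prod.remove[OF finI X, of "\<lambda>Y. h Y t \<theta>"] by simp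
      moreover have "h X t \<theta> \<noteq> 0" using h_nz[OF t th X] .
      ultimately show "hd X t \<theta> / h X t \<theta> = hd X t \<theta> * (\<Prod>Y\<in>I-{X}. h Y t \<theta>) / t"
        using t(2) by (auto simp: field_simps)
    qed
    then show ?thesis unfolding V_def by (simp add: sum_divide_distrib)
  qed
  then show ?thesis using V0 by simp
qed

definition cd :: "complex \<Rightarrow> real \<Rightarrow> complex" where
  "cd t \<theta> = pr * fst (Dg t \<theta>) + qr * snd (Dg t \<theta>)"

lemma coef_rel: "a (fst X) = mu X * a (fst Z) + lam X * pr" "b (fst X) = mu X * b (fst Z) + lam X * qr"
proof -
  define D where "D = a (fst Z) * qr - b (fst Z) * pr"
  have D: "D \<noteq> 0" using unram D_def by simp
  have "mu X * a (fst Z) + lam X * pr = ((a (fst X) * qr - b (fst X) * pr) * a (fst Z) + (a (fst Z) * b (fst X) - b (fst Z) * a (fst X)) * pr) / D"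
    unfolding muf_def lamf_def D_def[symmetric] by (simp add: add_divide_distrib)
  also have "\<dots> = a (fst X) * D / D" unfolding D_def by (simp add: algebra_simps)
  finally show "a (fst X) = mu X * a (fst Z) + lam X * pr" using D by simp
  have "mu X * b (fst Z) + lam X * qr = ((a (fst X) * qr - b (fst X) * pr) * b (fst Z) + (a (fst Z) * b (fst X) - b (fst Z) * a (fst X)) * qr) / D"
    unfolding muf_def lamf_def D_def[symmetric] by (simp add: add_divide_distrib)
  also have "\<dots> = b (fst X) * D / D" unfolding D_def by (simp add: algebra_simps)
  finally show "b (fst X) = mu X * b (fst Z) + lam X * qr" using D by simp
qed

lemma deriv_rel: "hd X t \<theta> = mu X * hd Z t \<theta> + lam X * cd t \<theta>"
  unfolding hd_def cd_def using coef_rel[of X] by (simp add: algebra_simps)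

lemma cd_norm: assumes t: "t \<in> cball 0 \<delta>" "t \<noteq> 0" and th: "\<theta> \<in> {0..1}"
  shows "cmod (cd t \<theta>) = 2*pi*r"
proof -
  have d1: "((\<lambda>u. pr * fst (\<gamma> t u) + qr * snd (\<gamma> t u)) has_vector_derivative cd t \<theta>) (at \<theta> within {0..1})"
    unfolding cd_def
    by (intro has_vector_derivative_add has_vector_derivative_mult_right vd_fst vd_snd
        has_vector_derivative_at_within[OF Dg(1)[OF t, rule_format, OF th]])
  have d2: "(circlepath piP r has_vector_derivative (2 * pi * \<i> * r * exp (2 * of_real pi * \<i> * \<theta>))) (at \<theta> within {0..1})"
    by (rule has_vector_derivative_at_within[OF has_vector_derivative_circlepath])
  have eq: "\<forall>u\<in>{0..1}. pr * fst (\<gamma> t u) + qr * snd (\<gamma> t u) = circlepath piP r u"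
    using circ t unfolding circlepath piP_def by (auto simp: cis_conv_exp mult_ac)
  have "cd t \<theta> = 2 * pi * \<i> * r * exp (2 * of_real pi * \<i> * \<theta>)" by (rule vd_unique01[OF th d1 d2 eq])
  moreover have "cmod (exp (2 * of_real pi * \<i> * \<theta>)) = 1"
    by (simp add: norm_exp_eq_Re)
  ultimately show ?thesis using rpos by (simp add: norm_mult)
qed

end


lemma nz_bounds:
  fixes F :: "complex \<Rightarrow> real \<Rightarrow> complex"
  assumes d: "\<delta> > 0" and cont: "continuous_on (cball 0 \<delta> \<times> {0..1}) (\<lambda>(t,\<theta>). F t \<theta>)"
    and nz: "\<forall>\<theta>\<in>{0..1}. F 0 \<theta> \<noteq> 0"
  shows "\<exists>C>0. \<forall>\<^sub>F t in at 0. \<forall>\<theta>\<in>{0..1}. 1/C \<le> cmod (F t \<theta>) \<and> cmod (F t \<theta>) \<le> C"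
proof -
  have c0: "continuous_on {0..1} (\<lambda>\<theta>. cmod (F 0 \<theta>))"
    using cont_slice[OF cont] d by (intro continuous_intros) auto
  obtain \<theta>0 where t0: "\<theta>0 \<in> {0..1}" and mn: "\<forall>y\<in>{0..1}. cmod (F 0 \<theta>0) \<le> cmod (F 0 y)"
    using continuous_attains_inf[OF compact_Icc _ c0] by auto
  obtain \<theta>1 where t1: "\<theta>1 \<in> {0..1}" and mx: "\<forall>y\<in>{0..1}. cmod (F 0 y) \<le> cmod (F 0 \<theta>1)"
    using continuous_attains_sup[OF compact_Icc _ c0] by auto
  define m where "m = cmod (F 0 \<theta>0)"
  define M where "M = cmod (F 0 \<theta>1)"
  have mpos: "m > 0" using nz t0 m_def by auto
  define C where "C = max (2/m) (M + m)"
  have Cpos: "C > 0" using mpos unfolding C_def by (simp add: less_max_iff_disj)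
  have ev: "\<forall>\<^sub>F t in at 0. t \<in> cball 0 \<delta> \<and> (\<forall>\<theta>\<in>{0..1}. dist (F t \<theta>) (F 0 \<theta>) < m/2)"
    using unif_close[OF d cont, of "m/2"] mpos by simp
  show ?thesis
  proof (intro exI[of _ C] conjI Cpos)
    show "\<forall>\<^sub>F t in at 0. \<forall>\<theta>\<in>{0..1}. 1/C \<le> cmod (F t \<theta>) \<and> cmod (F t \<theta>) \<le> C"
      using ev
    proof (rule eventually_mono, intro ballI conjI)
      fix t :: complex and \<theta> :: real assume H: "t \<in> cball 0 \<delta> \<and> (\<forall>\<theta>\<in>{0..1}. dist (F t \<theta>) (F 0 \<theta>) < m / 2)" and th: "\<theta> \<in> {0..1}"
      have dd: "cmod (F t \<theta> - F 0 \<theta>) < m/2" using H th by (simp add: dist_norm)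
      have l: "m \<le> cmod (F 0 \<theta>)" using mn th m_def by auto
      have u: "cmod (F 0 \<theta>) \<le> M" using mx th M_def by auto
      have "cmod (F 0 \<theta>) \<le> cmod (F t \<theta>) + cmod (F t \<theta> - F 0 \<theta>)" by (metis norm_triangle_sub norm_minus_commute)
      then have "m/2 \<le> cmod (F t \<theta>)" using dd l by linarith
      moreover have "1/C \<le> m/2"
      proof -
        have "2/m \<le> C" unfolding C_def by simp
        then have "2 \<le> C * m" using mpos by (simp add: pos_divide_le_eq)
        then show ?thesis using Cpos mpos by (simp add: field_simps)
      qed
      ultimately show "1/C \<le> cmod (F t \<theta>)" by linarith
      have "cmod (F t \<theta>) \<le> cmod (F 0 \<theta>) + cmod (F t \<theta> - F 0 \<theta>)" by (metis norm_triangle_sub)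
      moreover have "M + m \<le> C" unfolding C_def by simp
      ultimately show "cmod (F t \<theta>) \<le> C" using dd u mpos by linarith
    qed
  qed
qed

lemma ev_bound_fin:
  fixes Q :: "'a \<Rightarrow> 'b \<Rightarrow> real \<Rightarrow> bool"
  assumes "finite A" "\<And>x. x \<in> A \<Longrightarrow> \<exists>C. \<forall>\<^sub>F t in F. Q x t C"
    and mono: "\<And>x t C C'. Q x t C \<Longrightarrow> C \<le> C' \<Longrightarrow> Q x t C'"
  shows "\<exists>C. \<forall>\<^sub>F t in F. \<forall>x\<in>A. Q x t C"
  using assms(1,2)
proof (induction A rule: finite_induct)
  case empty
  then show ?case by auto
next
  case (insert x A)
  obtain C1 where C1: "\<forall>\<^sub>F t in F. Q x t C1" using insert.prems by auto
  obtain C2 where C2: "\<forall>\<^sub>F t in F. \<forall>y\<in>A. Q y t C2" using insert by auto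
  show ?case
  proof (intro exI[of _ "max C1 C2"])
    show "\<forall>\<^sub>F t in F. \<forall>y\<in>insert x A. Q y t (max C1 C2)"
      using eventually_conj[OF C1 C2]
    proof (rule eventually_mono)
      fix t assume H: "Q x t C1 \<and> (\<forall>y\<in>A. Q y t C2)"
      show "\<forall>y\<in>insert x A. Q y t (max C1 C2)"
        using H mono[OF _ max.cobounded1[of C1 C2]] mono[OF _ max.cobounded2[of C2 C1]] by blast
    qed
  qed
qed

context loopctx begin

lemma lower_bounds: "\<exists>C. C \<ge> 1 \<and> (\<forall>\<^sub>F t in at 0. \<forall>X\<in>I-{Z}. \<forall>\<theta>\<in>{0..1}. 1/C \<le> cmod (h X t \<theta>) \<and> cmod (h X t \<theta>) \<le> C)"
proof -
  let ?Q = "\<lambda>X t C. C \<ge> 1 \<and> (\<forall>\<theta>\<in>{0..1}. 1/C \<le> cmod (h X t \<theta>) \<and> cmod (h X t \<theta>) \<le> C)"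
  have "\<exists>C. \<forall>\<^sub>F t in at 0. \<forall>X\<in>I-{Z}. ?Q X t C"
  proof (rule ev_bound_fin)
    show "finite (I - {Z})" using finI by simp
  next
    fix X assume X: "X \<in> I - {Z}"
    obtain C where C: "C > 0" "\<forall>\<^sub>F t in at 0. \<forall>\<theta>\<in>{0..1}. 1/C \<le> cmod (h X t \<theta>) \<and> cmod (h X t \<theta>) \<le> C"
      using nz_bounds[OF dpos h_cont2] h0_nz X by blast
    have "\<forall>\<^sub>F t in at 0. ?Q X t (max 1 C)"
      using C(2)
    proof (rule eventually_mono, intro conjI ballI)
      fix t :: complex and \<theta> :: real assume H: "\<forall>\<theta>\<in>{0..1}. 1/C \<le> cmod (h X t \<theta>) \<and> cmod (h X t \<theta>) \<le> C" and th: "\<theta> \<in> {0..1}"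
      have "1/max 1 C \<le> 1/C" using C(1) by (intro divide_left_mono) auto
      then show "1/max 1 C \<le> cmod (h X t \<theta>)" using H th by force
      show "cmod (h X t \<theta>) \<le> max 1 C" using H th by force
    qed simp
    then show "\<exists>C. \<forall>\<^sub>F t in at 0. ?Q X t C" by blast
  next
    fix X and t :: complex and C C' :: real assume "?Q X t C" "C \<le> C'"
    then show "?Q X t C'"
    proof (intro conjI ballI)
      fix \<theta> :: real assume th: "\<theta> \<in> {0..1}"
      have "1/C' \<le> 1/C" using \<open>?Q X t C\<close> \<open>C \<le> C'\<close> by (intro divide_left_mono) auto
      then show "1/C' \<le> cmod (h X t \<theta>)" using \<open>?Q X t C\<close> th by force
      show "cmod (h X t \<theta>) \<le> C'" using \<open>?Q X t C\<close> \<open>C \<le> C'\<close> th by force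
    qed auto
  qed
  then obtain C where C: "\<forall>\<^sub>F t in at 0. \<forall>X\<in>I-{Z}. ?Q X t C" by blast
  have X0: "Z' \<in> I - {Z}" using Z'I ZZ' by auto
  have "\<forall>\<^sub>F t in at (0::complex). C \<ge> 1" using C by (rule eventually_mono) (use X0 in blast)
  then have "C \<ge> 1" by simp
  then show ?thesis using C by (intro exI[of _ C]) (auto elim!: eventually_mono)
qed

end


lemma core_bound:
  fixes hZ hdZ cd S1 S2 :: complex
  assumes e: "hdZ / hZ = -(hdZ * S1 + cd * S2)" and nz: "hZ \<noteq> 0" and hs: "cmod hZ \<le> \<epsilon>"
    and s1: "cmod S1 \<le> A1" and s2: "cmod S2 \<le> A2" and eA: "\<epsilon> * A1 \<le> 1/2" and e2: "\<epsilon> \<le> 1/2"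
    and cdn: "cmod cd = R" and A1: "A1 \<ge> 0" and A2: "A2 \<ge> 0"
  shows "cmod hdZ \<le> R * A2"
proof -
  have e0: "0 \<le> \<epsilon>" using hs norm_ge_zero[of hZ] by linarith
  have h1: "hdZ = - hZ * (hdZ * S1 + cd * S2)" using e nz by (simp add: field_simps)
  have "hdZ * (1 + hZ * S1) - (- (hZ * cd * S2)) = hdZ - (- hZ * (hdZ * S1 + cd * S2))"
    by (simp add: algebra_simps)
  also have "\<dots> = 0" using h1 by simp
  finally have eq: "hdZ * (1 + hZ * S1) = - (hZ * cd * S2)" by (simp add: eq_neg_iff_add_eq_0)
  have "cmod (hZ * S1) \<le> \<epsilon> * A1" unfolding norm_mult by (intro mult_mono hs s1) (use e0 in auto)
  moreover have "cmod (1::complex) \<le> cmod (1 + hZ * S1) + cmod (hZ * S1)"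
    using norm_triangle_ineq4[of "1 + hZ * S1" "hZ * S1"] by simp
  ultimately have n1: "cmod (1 + hZ * S1) \<ge> 1/2" using eA by simp
  have n2: "cmod (hZ * cd * S2) \<le> \<epsilon> * R * A2" unfolding norm_mult cdn
    by (intro mult_mono hs s2) (use e0 cdn[symmetric] in auto)
  have "cmod hdZ * (1/2) \<le> cmod hdZ * cmod (1 + hZ * S1)" by (rule mult_left_mono[OF n1]) simp
  also have "\<dots> = cmod (hZ * cd * S2)" using eq by (metis norm_minus_cancel norm_mult)
  finally have "cmod hdZ * (1/2) \<le> \<epsilon> * R * A2" using n2 by linarith
  moreover have "\<epsilon> * R * A2 \<le> (1/2) * R * A2"
    using e2 A2 cdn by (intro mult_right_mono) (auto)
  ultimately show ?thesis by linarith
qed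

context loopctx begin

lemma small_Z: assumes "\<epsilon> > 0" shows "\<forall>\<^sub>F t in at 0. \<forall>\<theta>\<in>{0..1}. cmod (h Z t \<theta>) < \<epsilon>"
proof -
  have "\<forall>\<^sub>F t in at 0. t \<in> cball 0 \<delta> \<and> (\<forall>\<theta>\<in>{0..1}. dist (h Z t \<theta>) (h Z 0 \<theta>) < \<epsilon>)"
    by (rule unif_close[OF dpos h_cont2 assms])
  then show ?thesis by (rule eventually_mono) (use on0 in \<open>auto simp: h_def dist_norm\<close>)
qed

lemma ev_cball: "\<forall>\<^sub>F t in at (0::complex). t \<in> cball 0 \<delta> \<and> t \<noteq> 0"
  unfolding eventually_at using dpos by (intro exI[of _ \<delta>]) (auto simp: dist_norm)

lemma good_bounds: "\<exists>C B. C \<ge> 1 \<and> (\<forall>\<^sub>F t in at 0. t \<in> cball 0 \<delta> \<and> t \<noteq> 0 \<and>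
   (\<forall>\<theta>\<in>{0..1}. (\<forall>X\<in>I-{Z}. 1/C \<le> cmod (h X t \<theta>) \<and> cmod (h X t \<theta>) \<le> C) \<and>
       (\<forall>X\<in>I. cmod (hd X t \<theta> / h X t \<theta>) \<le> B)))"
proof -
  obtain C where C1: "C \<ge> 1" and CE: "\<forall>\<^sub>F t in at 0. \<forall>X\<in>I-{Z}. \<forall>\<theta>\<in>{0..1}. 1/C \<le> cmod (h X t \<theta>) \<and> cmod (h X t \<theta>) \<le> C"
    using lower_bounds by blast
  define A1 where "A1 = C * (\<Sum>X\<in>I-{Z}. cmod (mu X))"
  define A2 where "A2 = C * (\<Sum>X\<in>I-{Z}. cmod (lam X))"
  define R where "R = 2*pi*r"
  define Mu where "Mu = (\<Sum>X\<in>I. cmod (mu X))"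
  define Lm where "Lm = (\<Sum>X\<in>I. cmod (lam X))"
  define B where "B = R * A2 * A1 + R * A2 + C * (Mu * (R * A2) + Lm * R)"
  define \<epsilon> where "\<epsilon> = 1 / (2 * (A1 + 1))"
  have A1p: "A1 \<ge> 0" unfolding A1_def using C1 by (intro mult_nonneg_nonneg sum_nonneg) auto
  have A2p: "A2 \<ge> 0" unfolding A2_def using C1 by (intro mult_nonneg_nonneg sum_nonneg) auto
  have Rp: "R \<ge> 0" unfolding R_def using rpos by simp
  have ep: "\<epsilon> > 0" unfolding \<epsilon>_def using A1p by simp
  have eA: "\<epsilon> * A1 \<le> 1/2" unfolding \<epsilon>_def using A1p by (simp add: field_simps)
  have e2: "\<epsilon> \<le> 1/2" unfolding \<epsilon>_def using A1p by (simp add: field_simps)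
  have EV: "\<forall>\<^sub>F t in at 0. (t \<in> cball 0 \<delta> \<and> t \<noteq> 0) \<and> (\<forall>X\<in>I-{Z}. \<forall>\<theta>\<in>{0..1}. 1/C \<le> cmod (h X t \<theta>) \<and> cmod (h X t \<theta>) \<le> C)
      \<and> (\<forall>\<theta>\<in>{0..1}. cmod (h Z t \<theta>) < \<epsilon>)"
    using eventually_conj[OF ev_cball eventually_conj[OF CE small_Z[OF ep]]] by simp
  have PT: "t \<in> cball 0 \<delta> \<and> t \<noteq> 0 \<and>
        (\<forall>\<theta>\<in>{0..1}. (\<forall>X\<in>I-{Z}. 1/C \<le> cmod (h X t \<theta>) \<and> cmod (h X t \<theta>) \<le> C) \<and>
         (\<forall>X\<in>I. cmod (hd X t \<theta> / h X t \<theta>) \<le> B))"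
      if H: "(t \<in> cball 0 \<delta> \<and> t \<noteq> 0) \<and> (\<forall>X\<in>I-{Z}. \<forall>\<theta>\<in>{0..1}. 1/C \<le> cmod (h X t \<theta>) \<and> cmod (h X t \<theta>) \<le> C)
        \<and> (\<forall>\<theta>\<in>{0..1}. cmod (h Z t \<theta>) < \<epsilon>)" for t
    proof -
      have tc: "t \<in> cball 0 \<delta>" "t \<noteq> 0" using H by auto
      have main: "\<forall>X\<in>I. cmod (hd X t \<theta> / h X t \<theta>) \<le> B" if th: "\<theta> \<in> {0..1}" for \<theta>
      proof -
      have inv: "\<And>X. X \<in> I-{Z} \<Longrightarrow> 1 / cmod (h X t \<theta>) \<le> C"
      proof -
        fix X assume X: "X \<in> I-{Z}"
        have l: "1/C \<le> cmod (h X t \<theta>)" using H th X by auto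
        have Cp: "0 < C" using C1 by simp
        then have hp: "0 < cmod (h X t \<theta>)" using l by (meson less_le_trans zero_less_divide_1_iff)
        have "1 \<le> cmod (h X t \<theta>) * C" using l Cp by (simp add: pos_divide_le_eq)
        then show "1 / cmod (h X t \<theta>) \<le> C" using hp by (simp add: pos_divide_le_eq mult.commute)
      qed
      define S1 where "S1 = (\<Sum>X\<in>I-{Z}. mu X / h X t \<theta>)"
      define S2 where "S2 = (\<Sum>X\<in>I-{Z}. lam X / h X t \<theta>)"
      have s1: "cmod S1 \<le> A1"
      proof -
        have "cmod S1 \<le> (\<Sum>X\<in>I-{Z}. cmod (mu X / h X t \<theta>))" unfolding S1_def by (rule norm_sum)
        also have "\<dots> \<le> (\<Sum>X\<in>I-{Z}. cmod (mu X) * C)"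
        proof (rule sum_mono)
          fix X assume X: "X \<in> I-{Z}"
          have "cmod (mu X / h X t \<theta>) = cmod (mu X) * (1 / cmod (h X t \<theta>))" by (simp add: norm_divide)
          also have "\<dots> \<le> cmod (mu X) * C" by (rule mult_left_mono[OF inv[OF X]]) simp
          finally show "cmod (mu X / h X t \<theta>) \<le> cmod (mu X) * C" .
        qed
        also have "\<dots> = A1" unfolding A1_def by (simp add: sum_distrib_left sum_distrib_right mult.commute)
        finally show ?thesis .
      qed
      have s2: "cmod S2 \<le> A2"
      proof -
        have "cmod S2 \<le> (\<Sum>X\<in>I-{Z}. cmod (lam X / h X t \<theta>))" unfolding S2_def by (rule norm_sum)
        also have "\<dots> \<le> (\<Sum>X\<in>I-{Z}. cmod (lam X) * C)"
        proof (rule sum_mono)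
          fix X assume X: "X \<in> I-{Z}"
          have "cmod (lam X / h X t \<theta>) = cmod (lam X) * (1 / cmod (h X t \<theta>))" by (simp add: norm_divide)
          also have "\<dots> \<le> cmod (lam X) * C" by (rule mult_left_mono[OF inv[OF X]]) simp
          finally show "cmod (lam X / h X t \<theta>) \<le> cmod (lam X) * C" .
        qed
        also have "\<dots> = A2" unfolding A2_def by (simp add: sum_distrib_left sum_distrib_right mult.commute)
        finally show ?thesis .
      qed
      have ls: "(\<Sum>X\<in>I. hd X t \<theta> / h X t \<theta>) = 0" by (rule logder_sum[OF tc th])
      have rest: "(\<Sum>X\<in>I-{Z}. hd X t \<theta> / h X t \<theta>) = hd Z t \<theta> * S1 + cd t \<theta> * S2"
      proof -
        have "(\<Sum>X\<in>I-{Z}. hd X t \<theta> / h X t \<theta>) = (\<Sum>X\<in>I-{Z}. hd Z t \<theta> * (mu X / h X t \<theta>) + cd t \<theta> * (lam X / h X t \<theta>))"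
        proof (rule sum.cong[OF refl])
          fix X
          have "hd X t \<theta> = mu X * hd Z t \<theta> + lam X * cd t \<theta>" by (rule deriv_rel)
          then show "hd X t \<theta> / h X t \<theta> = hd Z t \<theta> * (mu X / h X t \<theta>) + cd t \<theta> * (lam X / h X t \<theta>)"
            by (simp add: add_divide_distrib mult.commute)
        qed
        also have "\<dots> = hd Z t \<theta> * S1 + cd t \<theta> * S2"
          unfolding S1_def S2_def by (simp add: sum.distrib sum_distrib_left)
        finally show ?thesis .
      qed
      have e: "hd Z t \<theta> / h Z t \<theta> = -(hd Z t \<theta> * S1 + cd t \<theta> * S2)"
      proof -
        have "hd Z t \<theta> / h Z t \<theta> + (hd Z t \<theta> * S1 + cd t \<theta> * S2) = 0"
          using ls sum.remove[OF finI ZI, of "\<lambda>X. hd X t \<theta> / h X t \<theta>"] rest by simp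
        then show ?thesis by (simp add: eq_neg_iff_add_eq_0 del: minus_add_distrib)
      qed
      have cdn: "cmod (cd t \<theta>) = R" using cd_norm[OF tc th] R_def by simp
      have hdZ: "cmod (hd Z t \<theta>) \<le> R * A2"
        by (rule core_bound[OF e h_nz[OF tc th ZI] _ s1 s2 eA e2 cdn A1p A2p]) (use H th in \<open>auto intro: less_imp_le\<close>)
      show "\<forall>X\<in>I. cmod (hd X t \<theta> / h X t \<theta>) \<le> B"
      proof
        fix X assume X: "X \<in> I"
        show "cmod (hd X t \<theta> / h X t \<theta>) \<le> B"
        proof (cases "X = Z")
          case True
          have "cmod (hd Z t \<theta> / h Z t \<theta>) \<le> cmod (hd Z t \<theta> * S1) + cmod (cd t \<theta> * S2)"
            unfolding e by (metis norm_minus_cancel norm_triangle_ineq)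
          also have "\<dots> \<le> R * A2 * A1 + R * A2"
            unfolding norm_mult cdn
            by (intro add_mono mult_mono hdZ s1 s2) (use Rp A2p in auto)
          also have "\<dots> \<le> B" unfolding B_def using C1 Rp A2p
            by (auto intro!: mult_nonneg_nonneg add_nonneg_nonneg sum_nonneg simp: Mu_def Lm_def)
          finally show ?thesis using True by simp
        next
          case False
          then have XZ: "X \<in> I - {Z}" using X by auto
          have "cmod (hd X t \<theta> / h X t \<theta>) = cmod (hd X t \<theta>) * (1 / cmod (h X t \<theta>))"
            by (simp add: norm_divide)
          also have "\<dots> \<le> (cmod (mu X) * (R * A2) + cmod (lam X) * R) * C"
          proof (rule mult_mono)
            show "cmod (hd X t \<theta>) \<le> cmod (mu X) * (R * A2) + cmod (lam X) * R"
            proof -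
              have "cmod (hd X t \<theta>) = cmod (mu X * hd Z t \<theta> + lam X * cd t \<theta>)" by (subst deriv_rel) simp
              also have "\<dots> \<le> cmod (mu X * hd Z t \<theta>) + cmod (lam X * cd t \<theta>)" by (rule norm_triangle_ineq)
              also have "\<dots> \<le> cmod (mu X) * (R * A2) + cmod (lam X) * R"
                unfolding norm_mult cdn by (intro add_mono mult_left_mono hdZ) auto
              finally show ?thesis .
            qed
          qed (use inv[OF XZ] Rp A2p in auto)
          also have "\<dots> \<le> (Mu * (R * A2) + Lm * R) * C"
          proof -
            have "cmod (mu X) \<le> Mu" unfolding Mu_def by (rule member_le_sum[OF X]) (auto simp: finI)
            moreover have "cmod (lam X) \<le> Lm" unfolding Lm_def by (rule member_le_sum[OF X]) (auto simp: finI)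
            ultimately show ?thesis using Rp A2p C1
              by (intro mult_right_mono add_mono mult_right_mono) auto
          qed
          also have "\<dots> \<le> B" unfolding B_def using C1 Rp A2p A1p
            by (auto intro!: mult_nonneg_nonneg simp: algebra_simps)
          finally show ?thesis .
        qed
      qed
      qed
      show "t \<in> cball 0 \<delta> \<and> t \<noteq> 0 \<and>
        (\<forall>\<theta>\<in>{0..1}. (\<forall>X\<in>I-{Z}. 1/C \<le> cmod (h X t \<theta>) \<and> cmod (h X t \<theta>) \<le> C) \<and>
         (\<forall>X\<in>I. cmod (hd X t \<theta> / h X t \<theta>) \<le> B))" using H main by auto
    qed
  have "\<forall>\<^sub>F t in at 0. t \<in> cball 0 \<delta> \<and> t \<noteq> 0 \<and>
      (\<forall>\<theta>\<in>{0..1}. (\<forall>X\<in>I-{Z}. 1/C \<le> cmod (h X t \<theta>) \<and> cmod (h X t \<theta>) \<le> C) \<and>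
       (\<forall>X\<in>I. cmod (hd X t \<theta> / h X t \<theta>) \<le> B))"
      using EV by (rule eventually_mono) (rule PT)
  then show ?thesis using C1 by blast
qed

end


lemma Im_integral01:
  fixes f :: "real \<Rightarrow> complex"
  assumes "continuous_on {0..1} f"
  shows "integral {0..1} (\<lambda>\<theta>. Im (f \<theta>)) = Im (integral {0..1} f)"
proof -
  have "(f has_integral integral {0..1} f) {0..1}"
    using integrable_continuous_real[OF assms] by (simp add: has_integral_integral)
  from has_integral_linear[OF this bounded_linear_Im]
  show ?thesis by (simp add: o_def integral_unique)
qed

context loopctx begin

definition Wv :: "nat \<times> nat \<Rightarrow> real" where
  "Wv Y = (if Y = Z' then 1 else 0) - (if Y = Z then 1 else 0)"

lemma ratio_cont: assumes "t \<in> cball 0 \<delta>" "t \<noteq> 0" "Y \<in> I"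
  shows "continuous_on {0..1} (\<lambda>\<theta>. hd Y t \<theta> / h Y t \<theta>)"
  by (intro continuous_on_divide hd_cont h_cont assms) (use h_nz assms in auto)

lemma wind_Y: assumes Y: "Y \<in> I" "Y \<noteq> Z"
  shows "\<forall>\<^sub>F t in at 0. integral {0..1} (\<lambda>\<theta>. hd Y t \<theta> / h Y t \<theta>) = 2*pi*\<i>*(if Y = Z' then 1 else 0)"
proof -
  define \<beta> where "\<beta> = (if lam Y = 0 then 1 else lam Y)"
  have b0: "\<beta> \<noteq> 0" unfolding \<beta>_def by auto
  define K where "K t \<theta> = h Y t \<theta> / \<beta>" for t \<theta>
  define K' where "K' t \<theta> = hd Y t \<theta> / \<beta>" for t \<theta>
  have contK: "continuous_on (cball 0 \<delta> \<times> {0..1}) (\<lambda>(t,\<theta>). K t \<theta>)"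
  proof -
    have "continuous_on (cball 0 \<delta> \<times> {0..1}) (\<lambda>x. (\<lambda>(t,\<theta>). h Y t \<theta>) x / \<beta>)"
      by (intro continuous_intros h_cont2) (use b0 in auto)
    then show ?thesis unfolding K_def by (simp add: case_prod_unfold)
  qed
  have nzK: "\<forall>\<theta>\<in>{0..1}. K 0 \<theta> \<noteq> 0" unfolding K_def using h0_nz Y b0 by auto
  have loopK: "\<forall>t\<in>cball 0 \<delta>. K t 0 = K t 1" unfolding K_def h_def using loop by simp
  have derK: "\<forall>t\<in>cball 0 \<delta> - {0}. \<forall>\<theta>\<in>{0..1}. (K t has_vector_derivative K' t \<theta>) (at \<theta>)"
  proof (intro ballI)
    fix t :: complex and \<theta> :: real assume t: "t \<in> cball 0 \<delta> - {0}" and th: "\<theta> \<in> {0..1}"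
    have "((\<lambda>u. h Y t u / \<beta>) has_vector_derivative hd Y t \<theta> / \<beta>) (at \<theta>)"
      by (rule has_vector_derivative_divide[OF hd_has]) (use t th in auto)
    then show "(K t has_vector_derivative K' t \<theta>) (at \<theta>)" unfolding K_def K'_def .
  qed
  have dcontK: "\<forall>t\<in>cball 0 \<delta> - {0}. continuous_on {0..1} (K' t)"
    unfolding K'_def using hd_cont[where X=Y] b0 by (auto intro!: continuous_intros)
  have W: "\<forall>\<^sub>F t in at 0. integral {0..1} (\<lambda>\<theta>. K' t \<theta> / K t \<theta>) = 2*pi*\<i>*winding_number (K 0) 0"
    by (rule wind_integral[OF dpos contK nzK loopK derK dcontK])
  have wn: "winding_number (K 0) 0 = (if Y = Z' then 1 else 0)"
  proof (cases "Y = Z'")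
    case True
    then have b: "\<beta> = lam Z'" using lamZ' \<beta>_def by simp
    have "\<And>\<theta>. 0 \<le> \<theta> \<Longrightarrow> \<theta> \<le> 1 \<Longrightarrow> K 0 \<theta> = circlepath 0 r \<theta>"
      unfolding K_def b using h0 PZ' lamZ' True
      by (auto simp: circlepath cis_conv_exp mult_ac)
    then have "winding_number (K 0) 0 = winding_number (circlepath 0 r) 0"
      by (rule winding_number_cong)
    also have "\<dots> = 1" using rpos by (intro winding_number_circlepath) auto
    finally show ?thesis using True by simp
  next
    case False
    then have YI: "Y \<in> I - {Z,Z'}" using Y by auto
    show ?thesis
    proof (cases "lam Y = 0")
      case True
      then have c: "LL a b c Y P \<noteq> 0" using others YI by auto
      have "winding_number (K 0) 0 = 0"
        by (rule winding_number_constI[OF c]) (use h0 True \<beta>_def K_def in auto)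
      then show ?thesis using False by simp
    next
      case lne: False
      then have gt: "r < cmod (LL a b c Y P / lam Y)" using others YI by auto
      define z where "z = LL a b c Y P / lam Y"
      have "\<And>\<theta>. 0 \<le> \<theta> \<Longrightarrow> \<theta> \<le> 1 \<Longrightarrow> K 0 \<theta> = circlepath z r \<theta>"
        unfolding K_def \<beta>_def z_def using h0 lne
        by (auto simp: circlepath cis_conv_exp mult_ac add_divide_distrib)
      then have "winding_number (K 0) 0 = winding_number (circlepath z r) 0"
        by (rule winding_number_cong)
      also have "\<dots> = 0"
      proof (rule winding_number_zero_outside[of _ "cball z r"])
        show "path (circlepath z r)" by simp
        show "convex (cball z r)" by simp
        show "pathfinish (circlepath z r) = pathstart (circlepath z r)" by simp
        show "0 \<notin> cball z r" using gt z_def by (simp add: dist_norm)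
        show "path_image (circlepath z r) \<subseteq> cball z r"
          using rpos by (simp add: path_image_circlepath_nonneg sphere_cball)
      qed
      finally show ?thesis using False by simp
    qed
  qed
  have PT: "integral {0..1} (\<lambda>\<theta>. hd Y t \<theta> / h Y t \<theta>) = 2*pi*\<i>*(if Y = Z' then 1 else 0)"
    if H: "integral {0..1} (\<lambda>\<theta>. K' t \<theta> / K t \<theta>) = 2*pi*\<i>*winding_number (K 0) 0" for t
  proof -
    have "\<And>\<theta>. K' t \<theta> / K t \<theta> = hd Y t \<theta> / h Y t \<theta>" unfolding K_def K'_def using b0 by simp
    then show "integral {0..1} (\<lambda>\<theta>. hd Y t \<theta> / h Y t \<theta>) = 2*pi*\<i>*(if Y = Z' then 1 else 0)"
      using H wn by simp
  qed
  show ?thesis using W by (rule eventually_mono) (rule PT)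
qed


definition w :: "nat \<times> nat \<Rightarrow> complex \<Rightarrow> real \<Rightarrow> real" where "w Y t \<theta> = Im (hd Y t \<theta> / h Y t \<theta>)"
definition ell :: "nat \<times> nat \<Rightarrow> complex \<Rightarrow> real \<Rightarrow> real" where "ell X t \<theta> = ln (cmod (h X t \<theta>))"

lemma w_cont: assumes "t \<in> cball 0 \<delta>" "t \<noteq> 0" "Y \<in> I" shows "continuous_on {0..1} (w Y t)"
  unfolding w_def by (intro continuous_intros ratio_cont[OF assms, unfolded o_def]) 

lemma ell_cont: assumes "t \<in> cball 0 \<delta>" "t \<noteq> 0" "X \<in> I" shows "continuous_on {0..1} (ell X t)"
  unfolding ell_def by (intro continuous_intros h_cont assms(1)) (use h_nz assms in auto)

lemma V_ne: assumes Y: "Y \<in> I" "Y \<noteq> Z"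
  shows "\<forall>\<^sub>F t in at 0. integral {0..1} (w Y t) = 2*pi*Wv Y"
  using eventually_conj[OF wind_Y[OF Y] ev_cball]
proof (rule eventually_mono)
  fix t assume H: "integral {0..1} (\<lambda>\<theta>. hd Y t \<theta> / h Y t \<theta>) = 2*pi*\<i>*(if Y = Z' then 1 else 0) \<and> t \<in> cball 0 \<delta> \<and> t \<noteq> 0"
  have "integral {0..1} (w Y t) = Im (integral {0..1} (\<lambda>\<theta>. hd Y t \<theta> / h Y t \<theta>))"
    unfolding w_def using Im_integral01[OF ratio_cont[of t Y]] H Y by auto
  then show "integral {0..1} (w Y t) = 2*pi*Wv Y" using H Y unfolding Wv_def by auto
qed

lemma V_Z: "\<forall>\<^sub>F t in at 0. integral {0..1} (w Z t) = 2*pi*Wv Z"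
proof -
  have E1: "\<forall>\<^sub>F t in at 0. \<forall>Y\<in>I-{Z}. integral {0..1} (w Y t) = 2*pi*Wv Y"
    using finI V_ne by (intro eventually_ball_finite) auto
  show ?thesis using eventually_conj[OF E1 ev_cball]
  proof (rule eventually_mono)
    fix t assume H: "(\<forall>Y\<in>I-{Z}. integral {0..1} (w Y t) = 2*pi*Wv Y) \<and> t \<in> cball 0 \<delta> \<and> t \<noteq> 0"
    have tc: "t \<in> cball 0 \<delta>" "t \<noteq> 0" using H by auto
    have intg: "w Y t integrable_on {0..1}" if "Y \<in> I" for Y
      using integrable_continuous_real[OF w_cont[OF tc that]] .
    have pw: "w Z t \<theta> = - (\<Sum>Y\<in>I-{Z}. w Y t \<theta>)" if th: "\<theta> \<in> {0..1}" for \<theta>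
    proof -
      have "(\<Sum>Y\<in>I. w Y t \<theta>) = Im (\<Sum>Y\<in>I. hd Y t \<theta> / h Y t \<theta>)" unfolding w_def by (simp add: Im_sum)
      also have "\<dots> = 0" using logder_sum[OF tc th] by simp
      finally have "(\<Sum>Y\<in>I. w Y t \<theta>) = 0" .
      then show ?thesis using sum.remove[OF finI ZI, of "\<lambda>Y. w Y t \<theta>"] by simp
    qed
    have "integral {0..1} (w Z t) = integral {0..1} (\<lambda>\<theta>. - (\<Sum>Y\<in>I-{Z}. w Y t \<theta>))"
      by (rule integral_cong) (use pw in auto)
    also have "\<dots> = - (\<Sum>Y\<in>I-{Z}. integral {0..1} (w Y t))"
      by (subst integral_neg, subst integral_sum)
         (use finI intg in \<open>auto intro!: integrable_sum\<close>)
    also have "\<dots> = - (\<Sum>Y\<in>I-{Z}. 2*pi*(if Y = Z' then 1 else 0))"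
      using H unfolding Wv_def by (intro arg_cong[where f=uminus] sum.cong) auto
    also have "\<dots> = - 2*pi"
    proof -
      have "(\<Sum>Y\<in>I-{Z}. 2*pi*(if Y = Z' then 1 else 0)) = (\<Sum>Y\<in>I-{Z}. (if Y = Z' then 2*pi else 0))"
        by (rule sum.cong) auto
      also have "\<dots> = 2*pi" using Z'I ZZ' finI by (simp add: sum.delta')
      finally show ?thesis by simp
    qed
    also have "\<dots> = 2*pi*Wv Z" unfolding Wv_def using ZZ' by simp
    finally show "integral {0..1} (w Z t) = 2*pi*Wv Z" .
  qed
qed

lemma V_ev: "Y \<in> I \<Longrightarrow> \<forall>\<^sub>F t in at 0. integral {0..1} (w Y t) = 2*pi*Wv Y"
  using V_ne V_Z by (cases "Y = Z") auto

end


lemma vd_quot: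
  fixes f g :: "real \<Rightarrow> complex"
  assumes "(f has_vector_derivative f') (at x within S)" "(g has_vector_derivative g') (at x within S)" "g x \<noteq> 0"
  shows "((\<lambda>u. f u / g u) has_vector_derivative (f' * g x - f x * g') / (g x)^2) (at x within S)"
proof -
  have "((\<lambda>u. f u / g u) has_derivative (\<lambda>h. - f x * (inverse (g x) * (h *\<^sub>R g') * inverse (g x)) + (h *\<^sub>R f') / g x)) (at x within S)"
    using assms unfolding has_vector_derivative_def by (intro has_derivative_divide) auto
  moreover have "(\<lambda>h. - f x * (inverse (g x) * (h *\<^sub>R g') * inverse (g x)) + (h *\<^sub>R f') / g x) = (\<lambda>h. h *\<^sub>R ((f' * g x - f x * g') / (g x)^2))"
    using assms(3) by (auto simp: field_simps scaleR_conv_of_real power2_eq_square)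
  ultimately show ?thesis unfolding has_vector_derivative_def by simp
qed

lemma ln_bound:
  fixes x C :: real
  assumes "1 \<le> C" "1/C \<le> x" "x \<le> C"
  shows "\<bar>ln x\<bar> \<le> ln C"
proof -
  have "0 < 1/C" using assms by simp
  then have xp: "x > 0" using assms(2) by linarith
  have "ln x \<le> ln C" using assms xp by simp
  moreover have "ln (1/C) \<le> ln x" using assms xp by (subst ln_le_cancel_iff) auto
  moreover have "ln (1/C) = - ln C" using assms by (simp add: ln_div)
  ultimately show ?thesis by linarith
qed


lemma ln_norm_at0: "filterlim (\<lambda>t::complex. ln (cmod t)) at_bot (at 0)"
proof -
  have "filterlim (\<lambda>t::complex. cmod t) (at_right 0) (at 0)"
  proof (rule tendsto_imp_filterlim_at_right)
    show "((\<lambda>t::complex. cmod t) \<longlongrightarrow> 0) (at 0)"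
      using tendsto_norm[OF tendsto_ident_at, of "0::complex" UNIV] by simp
    show "\<forall>\<^sub>F t in at (0::complex). 0 < cmod t" by (auto simp: eventually_at intro!: exI[of _ 1])
  qed
  then show ?thesis using ln_at_0 filterlim_compose by blast
qed

lemma lim_from_bound:
  fixes F :: "complex \<Rightarrow> real"
  assumes "\<exists>K. \<forall>\<^sub>F t in at 0. \<bar>F t - ln (cmod t) * M\<bar> \<le> K"
  shows "((\<lambda>t. F t / ln (cmod t)) \<longlongrightarrow> M) (at 0)"
proof -
  obtain K where K: "\<forall>\<^sub>F t in at 0. \<bar>F t - ln (cmod t) * M\<bar> \<le> K" using assms by blast
  have L: "filterlim (\<lambda>t::complex. ln (cmod t)) at_infinity (at 0)"
    using filterlim_at_bot_imp_at_infinity[OF ln_norm_at0] .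
  have g0: "((\<lambda>t. \<bar>K / ln (cmod t)\<bar>) \<longlongrightarrow> 0) (at (0::complex))"
    using tendsto_rabs_zero[OF tendsto_divide_0[OF tendsto_const L]] .
  have ln0: "\<forall>\<^sub>F t in at (0::complex). ln (cmod t) < 0"
    using ln_norm_at0 by (simp add: filterlim_at_bot_dense)
  have "((\<lambda>t. (F t - ln (cmod t) * M) / ln (cmod t)) \<longlongrightarrow> 0) (at 0)"
  proof (rule Lim_null_comparison[OF _ g0])
    show "\<forall>\<^sub>F t in at 0. norm ((F t - ln (cmod t) * M) / ln (cmod t)) \<le> \<bar>K / ln (cmod t)\<bar>"
      using K
    proof (rule eventually_mono)
      fix t assume H: "\<bar>F t - ln (cmod t) * M\<bar> \<le> K"
      have "norm ((F t - ln (cmod t) * M) / ln (cmod t)) = \<bar>F t - ln (cmod t) * M\<bar> / \<bar>ln (cmod t)\<bar>"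
        by (simp add: abs_divide)
      also have "\<dots> \<le> K / \<bar>ln (cmod t)\<bar>" by (rule divide_right_mono[OF H]) simp
      also have "\<dots> \<le> \<bar>K / ln (cmod t)\<bar>" by (simp add: abs_divide divide_right_mono)
      finally show "norm ((F t - ln (cmod t) * M) / ln (cmod t)) \<le> \<bar>K / ln (cmod t)\<bar>" .
    qed
  qed
  then have "((\<lambda>t. M + (F t - ln (cmod t) * M) / ln (cmod t)) \<longlongrightarrow> M + 0) (at 0)"
    by (intro tendsto_add tendsto_const)
  then have T: "((\<lambda>t. M + (F t - ln (cmod t) * M) / ln (cmod t)) \<longlongrightarrow> M) (at 0)" by simp
  show ?thesis
  proof (rule Lim_transform_eventually[OF T])
    show "\<forall>\<^sub>F t in at 0. M + (F t - ln (cmod t) * M) / ln (cmod t) = F t / ln (cmod t)"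
      using ln0 by (rule eventually_mono) (simp add: field_simps)
  qed
qed

context loopctx begin

lemma J_bound: assumes X: "X \<in> I" and Y: "Y \<in> I"
  shows "\<exists>K. \<forall>\<^sub>F t in at 0. \<bar>integral {0..1} (\<lambda>\<theta>. ell X t \<theta> * w Y t \<theta>)
            - (if X = Z then ln (cmod t) * (2*pi*Wv Y) else 0)\<bar> \<le> K"
proof -
  obtain C B where C1: "C \<ge> 1" and GB: "\<forall>\<^sub>F t in at 0. t \<in> cball 0 \<delta> \<and> t \<noteq> 0 \<and>
   (\<forall>\<theta>\<in>{0..1}. (\<forall>X\<in>I-{Z}. 1/C \<le> cmod (h X t \<theta>) \<and> cmod (h X t \<theta>) \<le> C) \<and>
       (\<forall>X\<in>I. cmod (hd X t \<theta> / h X t \<theta>) \<le> B))"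
    using good_bounds by blast
  define K where "K = real (card I) * (ln C * \<bar>B\<bar>)"
  have lnC: "ln C \<ge> 0" using C1 by simp
  have "card I > 0" using finI ZI card_gt_0_iff by blast
  then have cI: "card I \<ge> 1" by simp
  have PT: "\<bar>integral {0..1} (\<lambda>\<theta>. ell X t \<theta> * w Y t \<theta>)
            - (if X = Z then ln (cmod t) * (2*pi*Wv Y) else 0)\<bar> \<le> K"
    if H: "(t \<in> cball 0 \<delta> \<and> t \<noteq> 0 \<and>
   (\<forall>\<theta>\<in>{0..1}. (\<forall>X\<in>I-{Z}. 1/C \<le> cmod (h X t \<theta>) \<and> cmod (h X t \<theta>) \<le> C) \<and>
       (\<forall>X\<in>I. cmod (hd X t \<theta> / h X t \<theta>) \<le> B))) \<and> integral {0..1} (w Y t) = 2*pi*Wv Y" for t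
  proof -
    have tc: "t \<in> cball 0 \<delta>" "t \<noteq> 0" using H by auto
    have wb: "\<bar>w Y t \<theta>\<bar> \<le> \<bar>B\<bar>" if th: "\<theta> \<in> {0..1}" for \<theta>
    proof -
      have "\<bar>w Y t \<theta>\<bar> \<le> cmod (hd Y t \<theta> / h Y t \<theta>)" unfolding w_def by (rule abs_Im_le_cmod)
      also have "\<dots> \<le> B" using H th Y by auto
      finally show ?thesis by simp
    qed
    have eb: "\<bar>ell X' t \<theta>\<bar> \<le> ln C" if X': "X' \<in> I-{Z}" and th: "\<theta> \<in> {0..1}" for X' \<theta>
      unfolding ell_def by (rule ln_bound[OF C1]) (use H X' th in auto)
    have Jb: "\<bar>integral {0..1} (\<lambda>\<theta>. ell X' t \<theta> * w Y t \<theta>)\<bar> \<le> ln C * \<bar>B\<bar>" if X': "X' \<in> I-{Z}" for X'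
    proof -
      have "norm (integral {0..1} (\<lambda>\<theta>. ell X' t \<theta> * w Y t \<theta>)) \<le> (ln C * \<bar>B\<bar>) * (1 - 0)"
      proof (rule integral_bound)
        show "continuous_on {0..1} (\<lambda>\<theta>. ell X' t \<theta> * w Y t \<theta>)"
          using ell_cont[OF tc] w_cont[OF tc Y] X' by (intro continuous_intros) auto
        fix \<theta> :: real assume th: "\<theta> \<in> {0..1}"
        show "norm (ell X' t \<theta> * w Y t \<theta>) \<le> ln C * \<bar>B\<bar>"
          unfolding real_norm_def abs_mult by (intro mult_mono eb wb X' th) (use lnC in auto)
      qed simp
      then show ?thesis by simp
    qed
    show ?thesis
    proof (cases "X = Z")
      case False
      then have "\<bar>integral {0..1} (\<lambda>\<theta>. ell X t \<theta> * w Y t \<theta>)\<bar> \<le> ln C * \<bar>B\<bar>" using Jb X by auto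
      also have "\<dots> = 1 * (ln C * \<bar>B\<bar>)" by simp
      also have "\<dots> \<le> K" unfolding K_def by (rule mult_right_mono) (use cI lnC in auto)
      finally show ?thesis using False by simp
    next
      case True
      have pw: "ell Z t \<theta> * w Y t \<theta> = ln (cmod t) * w Y t \<theta> - (\<Sum>X'\<in>I-{Z}. ell X' t \<theta> * w Y t \<theta>)"
        if th: "\<theta> \<in> {0..1}" for \<theta>
      proof -
        have "cmod t = (\<Prod>X'\<in>I. cmod (h X' t \<theta>))"
          using Fp tc th unfolding h_def by (simp add: prod_norm)
        then have "ln (cmod t) = (\<Sum>X'\<in>I. ell X' t \<theta>)"
          unfolding ell_def using finI h_nz[OF tc th] by (simp add: ln_prod)
        then have "ell Z t \<theta> = ln (cmod t) - (\<Sum>X'\<in>I-{Z}. ell X' t \<theta>)"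
          using sum.remove[OF finI ZI, of "\<lambda>X'. ell X' t \<theta>"] by simp
        then show ?thesis by (simp add: left_diff_distrib sum_distrib_right)
      qed
      have intg: "(\<lambda>\<theta>. ell X' t \<theta> * w Y t \<theta>) integrable_on {0..1}" if "X' \<in> I" for X'
        by (rule integrable_continuous_real)
           (use ell_cont[OF tc that] w_cont[OF tc Y] in \<open>intro continuous_intros\<close>)
      have intw: "w Y t integrable_on {0..1}" using integrable_continuous_real[OF w_cont[OF tc Y]] .
      have "integral {0..1} (\<lambda>\<theta>. ell Z t \<theta> * w Y t \<theta>)
          = integral {0..1} (\<lambda>\<theta>. ln (cmod t) * w Y t \<theta> - (\<Sum>X'\<in>I-{Z}. ell X' t \<theta> * w Y t \<theta>))"
        by (rule integral_cong) (use pw in auto)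
      also have "\<dots> = ln (cmod t) * integral {0..1} (w Y t) - (\<Sum>X'\<in>I-{Z}. integral {0..1} (\<lambda>\<theta>. ell X' t \<theta> * w Y t \<theta>))"
      proof -
        have i0: "(\<lambda>\<theta>. ln (cmod t) * w Y t \<theta>) integrable_on {0..1}" using integrable_on_cmult_left[OF intw, of "ln (cmod t)"] by simp
        have i1: "(\<lambda>\<theta>. \<Sum>X'\<in>I-{Z}. ell X' t \<theta> * w Y t \<theta>) integrable_on {0..1}"
          using intg finI by (intro integrable_sum) auto
        have "integral {0..1} (\<lambda>\<theta>. ln (cmod t) * w Y t \<theta> - (\<Sum>X'\<in>I-{Z}. ell X' t \<theta> * w Y t \<theta>))
           = integral {0..1} (\<lambda>\<theta>. ln (cmod t) * w Y t \<theta>) - integral {0..1} (\<lambda>\<theta>. \<Sum>X'\<in>I-{Z}. ell X' t \<theta> * w Y t \<theta>)"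
          by (rule integral_diff[OF i0 i1])
        also have "integral {0..1} (\<lambda>\<theta>. ln (cmod t) * w Y t \<theta>) = ln (cmod t) * integral {0..1} (w Y t)"
          by (rule integral_mult_right)
        also have "integral {0..1} (\<lambda>\<theta>. \<Sum>X'\<in>I-{Z}. ell X' t \<theta> * w Y t \<theta>) = (\<Sum>X'\<in>I-{Z}. integral {0..1} (\<lambda>\<theta>. ell X' t \<theta> * w Y t \<theta>))"
          using intg finI by (intro integral_sum) auto
        finally show ?thesis .
      qed
      finally have eq: "integral {0..1} (\<lambda>\<theta>. ell Z t \<theta> * w Y t \<theta>) - ln (cmod t) * (2*pi*Wv Y)
          = - (\<Sum>X'\<in>I-{Z}. integral {0..1} (\<lambda>\<theta>. ell X' t \<theta> * w Y t \<theta>))" using H by simp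
      have "\<bar>\<Sum>X'\<in>I-{Z}. integral {0..1} (\<lambda>\<theta>. ell X' t \<theta> * w Y t \<theta>)\<bar> \<le> (\<Sum>X'\<in>I-{Z}. ln C * \<bar>B\<bar>)"
        by (rule order_trans[OF sum_abs sum_mono]) (use Jb in auto)
      also have "\<dots> \<le> K" unfolding K_def using finI lnC card_Diff1_le[of I Z]
        by (simp add: mult_right_mono)
      finally show ?thesis using True eq by simp
    qed
  qed
  have "\<forall>\<^sub>F t in at 0. \<bar>integral {0..1} (\<lambda>\<theta>. ell X t \<theta> * w Y t \<theta>)
            - (if X = Z then ln (cmod t) * (2*pi*Wv Y) else 0)\<bar> \<le> K"
    using eventually_conj[OF GB V_ev[OF Y]] by (rule eventually_mono) (rule PT)
  then show ?thesis by blast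
qed


lemma q1: assumes t: "t \<in> cball 0 \<delta>" "t \<noteq> 0" and th: "\<theta> \<in> {0..1}" and E: "E \<in> I" and F: "F \<in> I" and k: "\<kappa> \<noteq> 0"
  shows "ln (cmod (\<kappa> * LL a b c E (\<gamma> t \<theta>) / LL a b c F (\<gamma> t \<theta>))) = ln (cmod \<kappa>) + ell E t \<theta> - ell F t \<theta>"
proof -
  have e: "h E t \<theta> \<noteq> 0" and f: "h F t \<theta> \<noteq> 0" using h_nz[OF t th] E F by auto
  have "cmod (\<kappa> * h E t \<theta> / h F t \<theta>) = cmod \<kappa> * cmod (h E t \<theta>) / cmod (h F t \<theta>)"
    by (simp add: norm_mult norm_divide)
  then have "ln (cmod (\<kappa> * h E t \<theta> / h F t \<theta>)) = ln (cmod \<kappa>) + ln (cmod (h E t \<theta>)) - ln (cmod (h F t \<theta>))"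
    using e f k by (simp add: ln_div ln_mult)
  then show ?thesis unfolding ell_def h_def .
qed

lemma q2: assumes t: "t \<in> cball 0 \<delta>" "t \<noteq> 0" and th: "\<theta> \<in> {0..1}" and E: "E \<in> I" and F: "F \<in> I" and k: "\<kappa> \<noteq> 0"
  shows "Im (vector_derivative (\<lambda>u. \<kappa> * LL a b c E (\<gamma> t u) / LL a b c F (\<gamma> t u)) (at \<theta> within {0..1})
            / (\<kappa> * LL a b c E (\<gamma> t \<theta>) / LL a b c F (\<gamma> t \<theta>))) = w E t \<theta> - w F t \<theta>"
proof -
  have e: "h E t \<theta> \<noteq> 0" and f: "h F t \<theta> \<noteq> 0" using h_nz[OF t th] E F by auto
  have dE: "((\<lambda>u. \<kappa> * h E t u) has_vector_derivative \<kappa> * hd E t \<theta>) (at \<theta> within {0..1})"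
    by (rule has_vector_derivative_mult_right[OF has_vector_derivative_at_within[OF hd_has[OF t th]]])
  have dF: "(h F t has_vector_derivative hd F t \<theta>) (at \<theta> within {0..1})"
    by (rule has_vector_derivative_at_within[OF hd_has[OF t th]])
  have "((\<lambda>u. \<kappa> * h E t u / h F t u) has_vector_derivative
          ((\<kappa> * hd E t \<theta>) * h F t \<theta> - (\<kappa> * h E t \<theta>) * hd F t \<theta>) / (h F t \<theta>)^2) (at \<theta> within {0..1})"
    using vd_quot[OF dE dF f] by simp
  then have vd: "vector_derivative (\<lambda>u. \<kappa> * h E t u / h F t u) (at \<theta> within {0..1})
      = ((\<kappa> * hd E t \<theta>) * h F t \<theta> - (\<kappa> * h E t \<theta>) * hd F t \<theta>) / (h F t \<theta>)^2"
    using vector_derivative_within_closed_interval[of 0 1 \<theta>] th by auto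
  have "((\<kappa> * hd E t \<theta>) * h F t \<theta> - (\<kappa> * h E t \<theta>) * hd F t \<theta>) / (h F t \<theta>)^2 / (\<kappa> * h E t \<theta> / h F t \<theta>)
      = hd E t \<theta> / h E t \<theta> - hd F t \<theta> / h F t \<theta>"
    using e f k by (simp add: field_simps power2_eq_square)
  then have "Im (vector_derivative (\<lambda>u. \<kappa> * h E t u / h F t u) (at \<theta> within {0..1}) / (\<kappa> * h E t \<theta> / h F t \<theta>))
      = w E t \<theta> - w F t \<theta>" unfolding vd w_def by simp
  then show ?thesis unfolding h_def .
qed

end


context loopctx begin

definition VV :: "nat \<times> nat \<Rightarrow> complex \<Rightarrow> real" where "VV Y t = integral {0..1} (w Y t)"
definition JJ :: "nat \<times> nat \<Rightarrow> nat \<times> nat \<Rightarrow> complex \<Rightarrow> real" where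
  "JJ X Y t = integral {0..1} (\<lambda>\<theta>. ell X t \<theta> * w Y t \<theta>)"

lemma pairing_expand:
  assumes t: "t \<in> cball 0 \<delta>" "t \<noteq> 0" and A: "A \<in> I" and B: "B \<in> I" and C: "C \<in> I" and D: "D \<in> I"
    and k: "\<kappa> \<noteq> 0" and k': "\<kappa>' \<noteq> 0"
  shows "pairing (\<gamma> t) (\<lambda>p. \<kappa> * LL a b c A p / LL a b c B p, \<lambda>p. \<kappa>' * LL a b c C p / LL a b c D p) * (2*pi)
   = ln (cmod \<kappa>) * (VV C t - VV D t) - ln (cmod \<kappa>') * (VV A t - VV B t)
     + (JJ A C t - JJ A D t - JJ B C t + JJ B D t) - (JJ C A t - JJ C B t - JJ D A t + JJ D B t)"
proof -
  define H where "H \<theta> = ln (cmod \<kappa>) * (w C t \<theta> - w D t \<theta>) - ln (cmod \<kappa>') * (w A t \<theta> - w B t \<theta>)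
     + (ell A t \<theta> * w C t \<theta> - ell A t \<theta> * w D t \<theta> - ell B t \<theta> * w C t \<theta> + ell B t \<theta> * w D t \<theta>)
     - (ell C t \<theta> * w A t \<theta> - ell C t \<theta> * w B t \<theta> - ell D t \<theta> * w A t \<theta> + ell D t \<theta> * w B t \<theta>)" for \<theta>
  have hV: "(w Y t has_integral VV Y t) {0..1}" if "Y \<in> I" for Y
    unfolding VV_def using integrable_continuous_real[OF w_cont[OF t that]] by (simp add: has_integral_integral)
  have hJ: "((\<lambda>\<theta>. ell X t \<theta> * w Y t \<theta>) has_integral JJ X Y t) {0..1}" if "X \<in> I" "Y \<in> I" for X Y
  proof -
    have "continuous_on {0..1} (\<lambda>\<theta>. ell X t \<theta> * w Y t \<theta>)"
      using ell_cont[OF t that(1)] w_cont[OF t that(2)] by (intro continuous_intros)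
    then show ?thesis unfolding JJ_def using integrable_continuous_real by (simp add: has_integral_integral)
  qed
  have hH: "(H has_integral (ln (cmod \<kappa>) * (VV C t - VV D t) - ln (cmod \<kappa>') * (VV A t - VV B t)
     + (JJ A C t - JJ A D t - JJ B C t + JJ B D t) - (JJ C A t - JJ C B t - JJ D A t + JJ D B t))) {0..1}"
    unfolding H_def
    by (intro has_integral_add has_integral_diff has_integral_mult_right hV hJ A B C D)
  have pw: "ln (cmod (\<kappa> * LL a b c A (\<gamma> t \<theta>) / LL a b c B (\<gamma> t \<theta>))) *
          Im (vector_derivative (\<lambda>u. \<kappa>' * LL a b c C (\<gamma> t u) / LL a b c D (\<gamma> t u)) (at \<theta> within {0..1})
             / (\<kappa>' * LL a b c C (\<gamma> t \<theta>) / LL a b c D (\<gamma> t \<theta>)))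
       - ln (cmod (\<kappa>' * LL a b c C (\<gamma> t \<theta>) / LL a b c D (\<gamma> t \<theta>))) *
          Im (vector_derivative (\<lambda>u. \<kappa> * LL a b c A (\<gamma> t u) / LL a b c B (\<gamma> t u)) (at \<theta> within {0..1})
             / (\<kappa> * LL a b c A (\<gamma> t \<theta>) / LL a b c B (\<gamma> t \<theta>))) = H \<theta>"
    if th: "\<theta> \<in> {0..1}" for \<theta>
    unfolding q1[OF t th A B k] q1[OF t th C D k'] q2[OF t th A B k] q2[OF t th C D k'] H_def
    by (simp add: algebra_simps)
  have "integral {0..1} (\<lambda>\<theta>. ln (cmod (\<kappa> * LL a b c A (\<gamma> t \<theta>) / LL a b c B (\<gamma> t \<theta>))) *
          Im (vector_derivative (\<lambda>u. \<kappa>' * LL a b c C (\<gamma> t u) / LL a b c D (\<gamma> t u)) (at \<theta> within {0..1})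
             / (\<kappa>' * LL a b c C (\<gamma> t \<theta>) / LL a b c D (\<gamma> t \<theta>)))
       - ln (cmod (\<kappa>' * LL a b c C (\<gamma> t \<theta>) / LL a b c D (\<gamma> t \<theta>))) *
          Im (vector_derivative (\<lambda>u. \<kappa> * LL a b c A (\<gamma> t u) / LL a b c B (\<gamma> t u)) (at \<theta> within {0..1})
             / (\<kappa> * LL a b c A (\<gamma> t \<theta>) / LL a b c B (\<gamma> t \<theta>))))
     = integral {0..1} H"
    by (rule integral_cong) (use pw in auto)
  also have "\<dots> = ln (cmod \<kappa>) * (VV C t - VV D t) - ln (cmod \<kappa>') * (VV A t - VV B t)
     + (JJ A C t - JJ A D t - JJ B C t + JJ B D t) - (JJ C A t - JJ C B t - JJ D A t + JJ D B t)"
    using hH by (rule integral_unique)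
  finally show ?thesis unfolding pairing_def Let_def by simp
qed


definition ind :: "nat \<times> nat \<Rightarrow> nat \<times> nat \<Rightarrow> real" where "ind X Y = (if X = Y then 1 else 0)"

definition Mval :: "nat \<times> nat \<Rightarrow> nat \<times> nat \<Rightarrow> nat \<times> nat \<Rightarrow> nat \<times> nat \<Rightarrow> real" where
  "Mval A B C D = (ind A Z - ind B Z) * (ind C Z' - ind D Z') - (ind C Z - ind D Z) * (ind A Z' - ind B Z')"

lemma ring_id:
  fixes PP pp wA wB wC wD L lk lk' vA vB vC vD iA iB iC iD jA jB jC jD jAC jAD jBC jBD jCA jCB jDA jDB :: real
  assumes "PP = lk*(vC - vD) - lk'*(vA - vB)
     + ((jAC + iA*(L*(pp*wC))) - (jAD + iA*(L*(pp*wD))) - (jBC + iB*(L*(pp*wC))) + (jBD + iB*(L*(pp*wD))))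
     - ((jCA + iC*(L*(pp*wA))) - (jCB + iC*(L*(pp*wB))) - (jDA + iD*(L*(pp*wA))) + (jDB + iD*(L*(pp*wB))))"
    and "wA = jA - iA" "wB = jB - iB" "wC = jC - iC" "wD = jD - iD"
  shows "PP - L * (pp * ((iA - iB) * (jC - jD) - (iC - iD) * (jA - jB)))
     = lk*(vC - vD) - lk'*(vA - vB) + (jAC - jAD - jBC + jBD) - (jCA - jCB - jDA + jDB)"
  using assms by (simp add: algebra_simps)

lemma pairing_lim:
  assumes A: "A \<in> I" and B: "B \<in> I" and C: "C \<in> I" and D: "D \<in> I"
    and k: "\<kappa> \<noteq> 0" and k': "\<kappa>' \<noteq> 0"
  shows "((\<lambda>t. pairing (\<gamma> t) (\<lambda>p. \<kappa> * LL a b c A p / LL a b c B p, \<lambda>p. \<kappa>' * LL a b c C p / LL a b c D p)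
            / ln (cmod t)) \<longlongrightarrow> Mval A B C D) (at 0)"
proof (rule lim_from_bound)
  define Jr where "Jr X Y t = JJ X Y t - (if X = Z then ln (cmod t) * (2*pi*Wv Y) else 0)" for X Y t
  have JB: "\<exists>K. \<forall>\<^sub>F t in at 0. \<bar>Jr X Y t\<bar> \<le> K" if "X \<in> I" "Y \<in> I" for X Y
    using J_bound[OF that] unfolding Jr_def JJ_def by simp
  obtain K1 where K1: "\<forall>\<^sub>F t in at 0. \<bar>Jr A C t\<bar> \<le> K1" using JB[OF A C] by blast
  obtain K2 where K2: "\<forall>\<^sub>F t in at 0. \<bar>Jr A D t\<bar> \<le> K2" using JB[OF A D] by blast
  obtain K3 where K3: "\<forall>\<^sub>F t in at 0. \<bar>Jr B C t\<bar> \<le> K3" using JB[OF B C] by blast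
  obtain K4 where K4: "\<forall>\<^sub>F t in at 0. \<bar>Jr B D t\<bar> \<le> K4" using JB[OF B D] by blast
  obtain K5 where K5: "\<forall>\<^sub>F t in at 0. \<bar>Jr C A t\<bar> \<le> K5" using JB[OF C A] by blast
  obtain K6 where K6: "\<forall>\<^sub>F t in at 0. \<bar>Jr C B t\<bar> \<le> K6" using JB[OF C B] by blast
  obtain K7 where K7: "\<forall>\<^sub>F t in at 0. \<bar>Jr D A t\<bar> \<le> K7" using JB[OF D A] by blast
  obtain K8 where K8: "\<forall>\<^sub>F t in at 0. \<bar>Jr D B t\<bar> \<le> K8" using JB[OF D B] by blast
  define c0 where "c0 = ln (cmod \<kappa>) * (2*pi*Wv C - 2*pi*Wv D) - ln (cmod \<kappa>') * (2*pi*Wv A - 2*pi*Wv B)"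
  define K where "K = (\<bar>c0\<bar> + K1 + K2 + K3 + K4 + K5 + K6 + K7 + K8) / (2*pi)"
  have EV: "\<forall>\<^sub>F t in at 0. (t \<in> cball 0 \<delta> \<and> t \<noteq> 0) \<and> (VV A t = 2*pi*Wv A \<and> VV B t = 2*pi*Wv B \<and> VV C t = 2*pi*Wv C \<and> VV D t = 2*pi*Wv D)
     \<and> (\<bar>Jr A C t\<bar> \<le> K1 \<and> \<bar>Jr A D t\<bar> \<le> K2 \<and> \<bar>Jr B C t\<bar> \<le> K3 \<and> \<bar>Jr B D t\<bar> \<le> K4
     \<and> \<bar>Jr C A t\<bar> \<le> K5 \<and> \<bar>Jr C B t\<bar> \<le> K6 \<and> \<bar>Jr D A t\<bar> \<le> K7 \<and> \<bar>Jr D B t\<bar> \<le> K8)"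
    unfolding VV_def
    by (intro eventually_conj ev_cball V_ev A B C D K1 K2 K3 K4 K5 K6 K7 K8)
  have PT: "\<bar>pairing (\<gamma> t) (\<lambda>p. \<kappa> * LL a b c A p / LL a b c B p, \<lambda>p. \<kappa>' * LL a b c C p / LL a b c D p)
              - ln (cmod t) * Mval A B C D\<bar> \<le> K"
    if H: "(t \<in> cball 0 \<delta> \<and> t \<noteq> 0) \<and> (VV A t = 2*pi*Wv A \<and> VV B t = 2*pi*Wv B \<and> VV C t = 2*pi*Wv C \<and> VV D t = 2*pi*Wv D)
     \<and> (\<bar>Jr A C t\<bar> \<le> K1 \<and> \<bar>Jr A D t\<bar> \<le> K2 \<and> \<bar>Jr B C t\<bar> \<le> K3 \<and> \<bar>Jr B D t\<bar> \<le> K4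
     \<and> \<bar>Jr C A t\<bar> \<le> K5 \<and> \<bar>Jr C B t\<bar> \<le> K6 \<and> \<bar>Jr D A t\<bar> \<le> K7 \<and> \<bar>Jr D B t\<bar> \<le> K8)" for t
  proof -
    let ?P = "pairing (\<gamma> t) (\<lambda>p. \<kappa> * LL a b c A p / LL a b c B p, \<lambda>p. \<kappa>' * LL a b c C p / LL a b c D p)"
    have tc: "t \<in> cball 0 \<delta>" "t \<noteq> 0" using H by auto
    have JJe: "JJ X Y t = Jr X Y t + ind X Z * (ln (cmod t) * (2*pi*Wv Y))" for X Y
      unfolding Jr_def ind_def by simp
    have WvI: "Wv Y = ind Y Z' - ind Y Z" for Y unfolding Wv_def ind_def by simp
    have E: "?P * (2*pi) = ln (cmod \<kappa>) * (VV C t - VV D t) - ln (cmod \<kappa>') * (VV A t - VV B t)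
     + (JJ A C t - JJ A D t - JJ B C t + JJ B D t) - (JJ C A t - JJ C B t - JJ D A t + JJ D B t)"
      by (rule pairing_expand[OF tc A B C D k k'])
    have R: "?P * (2*pi) - ln (cmod t) * (2*pi * ((ind A Z - ind B Z) * (ind C Z' - ind D Z') - (ind C Z - ind D Z) * (ind A Z' - ind B Z')))
      = ln (cmod \<kappa>) * (VV C t - VV D t) - ln (cmod \<kappa>') * (VV A t - VV B t)
        + (Jr A C t - Jr A D t - Jr B C t + Jr B D t) - (Jr C A t - Jr C B t - Jr D A t + Jr D B t)"
      by (rule ring_id[OF E[unfolded JJe] WvI WvI WvI WvI])
    have "?P * (2*pi) - ln (cmod t) * Mval A B C D * (2*pi)
      = c0 + (Jr A C t - Jr A D t - Jr B C t + Jr B D t) - (Jr C A t - Jr C B t - Jr D A t + Jr D B t)"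
      using R H unfolding c0_def Mval_def by (simp add: algebra_simps)
    then have "\<bar>(?P - ln (cmod t) * Mval A B C D) * (2*pi)\<bar> \<le> \<bar>c0\<bar> + K1 + K2 + K3 + K4 + K5 + K6 + K7 + K8"
      using H by (simp add: left_diff_distrib abs_le_iff) linarith
    then show ?thesis unfolding K_def abs_mult using pi_gt_zero by (simp add: field_simps)
  qed
  show "\<exists>K. \<forall>\<^sub>F t in at 0. \<bar>pairing (\<gamma> t) (\<lambda>p. \<kappa> * LL a b c A p / LL a b c B p, \<lambda>p. \<kappa>' * LL a b c C p / LL a b c D p)
              - ln (cmod t) * Mval A B C D\<bar> \<le> K"
  proof -
    have "\<forall>\<^sub>F t in at 0. \<bar>pairing (\<gamma> t) (\<lambda>p. \<kappa> * LL a b c A p / LL a b c B p, \<lambda>p. \<kappa>' * LL a b c C p / LL a b c D p)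
              - ln (cmod t) * Mval A B C D\<bar> \<le> K"
      using EV by (rule eventually_mono) (rule PT)
    then show ?thesis by blast
  qed
qed

end


definition indg :: "nat \<times> nat \<Rightarrow> nat \<times> nat \<Rightarrow> real" where "indg X Y = (if X = Y then 1 else 0)"

definition Mg :: "nat \<times> nat \<Rightarrow> nat \<times> nat \<Rightarrow> nat \<times> nat \<Rightarrow> nat \<times> nat \<Rightarrow> nat \<times> nat \<Rightarrow> nat \<times> nat \<Rightarrow> real" where
  "Mg Z Z' A B C D = (indg A Z - indg B Z) * (indg C Z' - indg D Z') - (indg C Z - indg D Z) * (indg A Z' - indg B Z')"

fun tA :: "atag \<Rightarrow> nat \<times> nat" where
  "tA (RT j m) = (1,1)" | "tA (TT i j k l m n) = (k,l)"
fun tB :: "atag \<Rightarrow> nat \<times> nat" where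
  "tB (RT j m) = (1,j)" | "tB (TT i j k l m n) = (i,j)"
fun tC :: "atag \<Rightarrow> nat \<times> nat" where
  "tC (RT j m) = (2,1)" | "tC (TT i j k l m n) = (m,n)"
fun tD :: "atag \<Rightarrow> nat \<times> nat" where
  "tD (RT j m) = (2,m)" | "tD (TT i j k l m n) = (i,j)"

fun M0 :: "nat \<times> nat \<times> nat \<times> nat \<Rightarrow> atag \<Rightarrow> real" where
  "M0 (i,j,k,l) tg = Mg (i,j) (k,l) (tA tg) (tB tg) (tC tg) (tD tg)"

fun dmap :: "atag \<Rightarrow> nat \<times> nat \<times> nat \<times> nat" where
  "dmap (RT j m) = (1,j,2,m)"
| "dmap (TT i j k l m n) = (if j = 1 then (k,l,m,n) else (1,j,m,n))"

lemma L1: "tg \<in> alpha_tags N Nn \<Longrightarrow> 2 \<le> N \<Longrightarrow> dmap tg \<in> S_idx N Nn"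
  unfolding alpha_tags_def S_idx_def by auto

lemma L2: "inj_on dmap (alpha_tags N Nn)"
  unfolding alpha_tags_def inj_on_def by auto

lemma L3: assumes "s \<in> S_idx N Nn" "\<forall>i\<in>{1..N}. Nn i \<ge> 1" shows "\<exists>tg\<in>alpha_tags N Nn. dmap tg = s"
proof -
  obtain i j k l where s: "s = (i,j,k,l)" by (cases s) auto
  have H: "1 \<le> i" "i < k" "k \<le> N" "1 \<le> j" "j \<le> Nn i" "1 \<le> l" "l \<le> Nn k" "(i,j) \<noteq> (1,1)" "(i,k,l) \<noteq> (1,2,1)"
    using assms(1) unfolding s S_idx_def by auto
  show ?thesis
  proof (cases "i = 1")
    case i1: True
    show ?thesis
    proof (cases "k = 2")
      case True
      then show ?thesis using H i1 s by (intro bexI[of _ "RT j l"]) (auto simp: alpha_tags_def)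
    next
      case False
      then show ?thesis using H i1 s by (intro bexI[of _ "TT 1 j 2 1 k l"]) (auto simp: alpha_tags_def)
    qed
  next
    case False
    then show ?thesis using H s by (intro bexI[of _ "TT 1 1 i j k l"]) (auto simp: alpha_tags_def)
  qed
qed

lemma L4: assumes "s \<in> S_idx N Nn" "tg \<in> alpha_tags N Nn" "M0 s tg \<noteq> 0"
  shows "s = dmap tg \<or> (fst s = 2 \<and> fst (dmap tg) = 1)"
  using assms unfolding S_idx_def alpha_tags_def
  by (auto simp: Mg_def indg_def split: if_splits)

lemma L5: assumes "tg \<in> alpha_tags N Nn" shows "\<bar>M0 (dmap tg) tg\<bar> = 1"
  using assms unfolding alpha_tags_def by (auto simp: Mg_def indg_def)


lemma dmap_bij: assumes "2 \<le> N" "\<forall>i\<in>{1..N}. Nn i \<ge> 1"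
  shows "bij_betw dmap (alpha_tags N Nn) (S_idx N Nn)"
proof -
  have "dmap ` alpha_tags N Nn \<subseteq> S_idx N Nn" using L1[OF _ assms(1)] by blast
  moreover have "S_idx N Nn \<subseteq> dmap ` alpha_tags N Nn" using L3[OF _ assms(2)] by force
  ultimately show ?thesis unfolding bij_betw_def using L2 by blast
qed

lemma det_pm1:
  fixes E :: "nat \<Rightarrow> nat \<Rightarrow> real"
  assumes N2: "2 \<le> N" and Nn1: "\<forall>i\<in>{1..N}. Nn i \<ge> 1"
    and es: "bij_betw es {..<g} (S_idx N Nn)" and ea: "bij_betw ea {..<g} (alpha_tags N Nn)"
    and E: "\<And>u v. u < g \<Longrightarrow> v < g \<Longrightarrow> \<bar>E u v\<bar> = \<bar>M0 (es u) (ea v)\<bar>"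
  shows "\<bar>Determinant.det (mat g g (\<lambda>(u,v). E u v))\<bar> = 1"
proof -
  define \<phi> where "\<phi> = dmap \<circ> ea"
  have phi: "bij_betw \<phi> {..<g} (S_idx N Nn)" unfolding \<phi>_def
    by (rule bij_betw_trans[OF ea dmap_bij[OF N2 Nn1]])
  define f0 where "f0 u = (if u < g then inv_into {..<g} \<phi> (es u) else u)" for u
  have f0b: "bij_betw f0 {..<g} {..<g}"
  proof -
    have "bij_betw (inv_into {..<g} \<phi> \<circ> es) {..<g} {..<g}"
      by (rule bij_betw_trans[OF es bij_betw_inv_into[OF phi]])
    then show ?thesis by (rule bij_betw_cong[THEN iffD1, rotated]) (auto simp: f0_def)
  qed
  have f0p: "f0 permutes {..<g}" by (rule bij_imp_permutes[OF f0b]) (auto simp: f0_def)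
  have f0e: "es u = \<phi> (f0 u)" if "u < g" for u
  proof -
    have "es u \<in> S_idx N Nn" using es that by (auto simp: bij_betw_def)
    then show ?thesis using that f0_def bij_betw_inv_into_right[OF phi] by metis
  qed
  have uniq: "p = f0" if p: "p permutes {..<g}" and nz: "(\<Prod>u = 0..<g. E u (p u)) \<noteq> 0" for p
  proof -
    have pg: "p u < g" if "u < g" for u using permutes_in_image[OF p] that by simp
    have nzu: "M0 (es u) (ea (p u)) \<noteq> 0" if u: "u < g" for u
    proof -
      have "E u (p u) \<noteq> 0" using nz u by (auto simp: prod_zero_iff)
      then show ?thesis using E[OF u pg[OF u]] by auto
    qed
    have esS: "es u \<in> S_idx N Nn" if "u < g" for u using es that by (auto simp: bij_betw_def)
    have eaA: "ea v \<in> alpha_tags N Nn" if "v < g" for v using ea that by (auto simp: bij_betw_def)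
    have key: "es u = \<phi> (p u)" if u: "u < g" for u
    proof (rule ccontr)
      assume ne: "es u \<noteq> \<phi> (p u)"
      have c: "fst (es u) = 2 \<and> fst (dmap (ea (p u))) = 1"
        using L4[OF esS[OF u] eaA[OF pg[OF u]] nzu[OF u]] ne \<phi>_def by auto
      have "\<phi> (p u) \<in> S_idx N Nn" using phi pg[OF u] by (auto simp: bij_betw_def)
      then have "\<phi> (p u) \<in> es ` {..<g}" using es by (simp add: bij_betw_def)
      then obtain u' where u': "u' < g" "es u' = \<phi> (p u)" by (metis imageE lessThan_iff)
      have "es u' = dmap (ea (p u')) \<or> (fst (es u') = 2 \<and> fst (dmap (ea (p u'))) = 1)"
        using L4[OF esS[OF u'(1)] eaA[OF pg[OF u'(1)]] nzu[OF u'(1)]] .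
      moreover have "fst (es u') = 1" using u'(2) c \<phi>_def by simp
      ultimately have "\<phi> (p u') = \<phi> (p u)" using u'(2) \<phi>_def by auto
      then have "p u' = p u" using phi pg u u' by (auto simp: bij_betw_def inj_on_def)
      then have "u' = u" using permutes_inj[OF p] by (auto simp: inj_def)
      then show False using c u' \<phi>_def by auto
    qed
    show "p = f0"
    proof
      fix u show "p u = f0 u"
      proof (cases "u < g")
        case True
        have "inv_into {..<g} \<phi> (es u) = p u"
          using key[OF True] bij_betw_inv_into_left[OF phi] pg[OF True] by simp
        then show ?thesis using True f0_def by simp
      next
        case False
        then show ?thesis using permutes_not_in[OF p] f0_def by simp
      qed
    qed
  qed
  have "Determinant.det (mat g g (\<lambda>(u,v). E u v)) = (\<Sum>p\<in>{p. p permutes {0..<g}}. signof p * (\<Prod>u = 0..<g. E u (p u)))"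
    by (subst det_def'[of _ g]) (auto intro!: sum.cong prod.cong)
  also have "\<dots> = signof f0 * (\<Prod>u = 0..<g. E u (f0 u))"
  proof -
    have fin: "finite {p. p permutes {0..<g}}" by (rule finite_permutations) simp
    have mem: "f0 \<in> {p. p permutes {0..<g}}" using f0p by (simp add: lessThan_atLeast0)
    have "(\<Sum>p\<in>{p. p permutes {0..<g}}. signof p * (\<Prod>u = 0..<g. E u (p u)))
        = signof f0 * (\<Prod>u = 0..<g. E u (f0 u)) + (\<Sum>p\<in>{p. p permutes {0..<g}} - {f0}. signof p * (\<Prod>u = 0..<g. E u (p u)))"
      by (rule sum.remove[OF fin mem])
    also have "(\<Sum>p\<in>{p. p permutes {0..<g}} - {f0}. signof p * (\<Prod>u = 0..<g. E u (p u))) = 0"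
      using uniq by (intro sum.neutral) (auto simp: lessThan_atLeast0)
    finally show ?thesis by simp
  qed
  finally have D: "Determinant.det (mat g g (\<lambda>(u,v). E u v)) = signof f0 * (\<Prod>u = 0..<g. E u (f0 u))" .
  have "\<bar>\<Prod>u = 0..<g. E u (f0 u)\<bar> = (\<Prod>u = 0..<g. \<bar>E u (f0 u)\<bar>)" by (rule abs_prod)
  also have "\<dots> = (\<Prod>u = 0..<g. 1)"
  proof (rule prod.cong[OF refl])
    fix u assume "u \<in> {0..<g}"
    then have u: "u < g" by simp
    have fu: "f0 u < g" using f0b u by (auto simp: bij_betw_def)
    have "ea (f0 u) \<in> alpha_tags N Nn" using ea fu by (auto simp: bij_betw_def)
    then show "\<bar>E u (f0 u)\<bar> = 1" using E[OF u fu] f0e[OF u] L5 \<phi>_def by simp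
  qed
  finally have "\<bar>\<Prod>u = 0..<g. E u (f0 u)\<bar> = 1" by simp
  moreover have "\<bar>signof f0 :: real\<bar> = 1" by (simp add: sign_def)
  ultimately show ?thesis unfolding D abs_mult by simp
qed


lemma det_lim:
  fixes F :: "nat \<Rightarrow> nat \<Rightarrow> complex \<Rightarrow> real" and E :: "nat \<Rightarrow> nat \<Rightarrow> real"
  assumes lim: "\<And>u v. u < g \<Longrightarrow> v < g \<Longrightarrow> ((\<lambda>t. F u v t / ln (cmod t)) \<longlongrightarrow> E u v) (at 0)"
  shows "((\<lambda>t. Determinant.det (mat g g (\<lambda>(u,v). F u v t)) / (ln (cmod t)) ^ g)
           \<longlongrightarrow> Determinant.det (mat g g (\<lambda>(u,v). E u v))) (at 0)"
proof -
  define PS where "PS = {p. p permutes {0..<g}}"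
  have detF: "Determinant.det (mat g g (\<lambda>(u,v). F u v t)) = (\<Sum>p\<in>PS. signof p * (\<Prod>u = 0..<g. F u (p u) t))" for t
    unfolding PS_def by (subst det_def'[of _ g]) (auto intro!: sum.cong prod.cong)
  have detE: "Determinant.det (mat g g (\<lambda>(u,v). E u v)) = (\<Sum>p\<in>PS. signof p * (\<Prod>u = 0..<g. E u (p u)))"
    unfolding PS_def by (subst det_def'[of _ g]) (auto intro!: sum.cong prod.cong)
  have eq: "Determinant.det (mat g g (\<lambda>(u,v). F u v t)) / (ln (cmod t)) ^ g
      = (\<Sum>p\<in>PS. signof p * (\<Prod>u = 0..<g. F u (p u) t / ln (cmod t)))" for t
  proof -
    have "(\<Prod>u = 0..<g. F u (p u) t / ln (cmod t)) = (\<Prod>u = 0..<g. F u (p u) t) / (ln (cmod t)) ^ g" for p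
      by (simp add: prod_dividef)
    then show ?thesis unfolding detF by (simp add: sum_divide_distrib)
  qed
  have "((\<lambda>t. \<Sum>p\<in>PS. signof p * (\<Prod>u = 0..<g. F u (p u) t / ln (cmod t)))
          \<longlongrightarrow> (\<Sum>p\<in>PS. signof p * (\<Prod>u = 0..<g. E u (p u)))) (at 0)"
  proof (intro tendsto_sum tendsto_mult tendsto_const tendsto_prod)
    fix p u assume p: "p \<in> PS" and u: "u \<in> {0..<g}"
    have "p u < g" using permutes_in_image[of p "{0..<g}" u] p u unfolding PS_def by auto
    then show "((\<lambda>t. F u (p u) t / ln (cmod t)) \<longlongrightarrow> E u (p u)) (at 0)" using lim u by simp
  qed
  then show ?thesis unfolding eq detE .
qed

fun tk :: "(nat \<Rightarrow> complex) \<Rightarrow> (nat \<Rightarrow> complex) \<Rightarrow> atag \<Rightarrow> complex" where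
  "tk a b (RT j m) = 1" | "tk a b (TT i j k l m n) = br a b i m / br a b k m"
fun tk' :: "(nat \<Rightarrow> complex) \<Rightarrow> (nat \<Rightarrow> complex) \<Rightarrow> atag \<Rightarrow> complex" where
  "tk' a b (RT j m) = 1" | "tk' a b (TT i j k l m n) = br a b i k / br a b m k"

lemma alpha_gen: "alpha_of a b c tg = (\<lambda>p. tk a b tg * LL a b c (tA tg) p / LL a b c (tB tg) p,
                                      \<lambda>p. tk' a b tg * LL a b c (tC tg) p / LL a b c (tD tg) p)"
  by (cases tg) (auto simp: Rsym_def Tsym_def LL_def)

lemma tk_nz: assumes "tg \<in> alpha_tags N Nn" "\<forall>i\<in>{1..N}. \<forall>k\<in>{1..N}. i \<noteq> k \<longrightarrow> br a b i k \<noteq> 0"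
  shows "tk a b tg \<noteq> 0" "tk' a b tg \<noteq> 0"
  using assms unfolding alpha_tags_def by auto

lemma tags_I: assumes "tg \<in> alpha_tags N Nn" "2 \<le> N" "\<forall>i\<in>{1..N}. Nn i \<ge> 1"
  shows "tA tg \<in> Sigma {1..N} (\<lambda>i. {1..Nn i})" "tB tg \<in> Sigma {1..N} (\<lambda>i. {1..Nn i})"
        "tC tg \<in> Sigma {1..N} (\<lambda>i. {1..Nn i})" "tD tg \<in> Sigma {1..N} (\<lambda>i. {1..Nn i})"
  using assms unfolding alpha_tags_def by auto

lemma Fprod_Sigma: "Fprod a b c N Nn p = (\<Prod>X\<in>Sigma {1..N} (\<lambda>i. {1..Nn i}). LL a b c X p)"
  unfolding Fprod_def LL_def by (subst prod.Sigma) (auto simp: case_prod_unfold)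

lemma (in loopctx) Mval_Mg: "Mval A B C D = Mg Z Z' A B C D"
  unfolding Mval_def ind_def Mg_def indg_def by simp


lemma inst:
  fixes N :: nat and Nn :: "nat \<Rightarrow> nat" and a b :: "nat \<Rightarrow> complex" and c :: "nat \<Rightarrow> nat \<Rightarrow> complex"
    and \<Gamma> :: "complex \<Rightarrow> real \<Rightarrow> pt"
  assumes distinct_lines: "\<forall>i\<in>{1..N}. \<forall>j\<in>{1..Nn i}. \<forall>k\<in>{1..Nn i}. j \<noteq> k \<longrightarrow> c i j \<noteq> c i k"
    and bracket: "\<forall>i\<in>{1..N}. \<forall>k\<in>{1..N}. i \<noteq> k \<longrightarrow> br a b i k \<noteq> 0"
    and no_triple: "\<forall>i1\<in>{1..N}. \<forall>j1\<in>{1..Nn i1}. \<forall>i2\<in>{1..N}. \<forall>j2\<in>{1..Nn i2}.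
        \<forall>i3\<in>{1..N}. \<forall>j3\<in>{1..Nn i3}.
        (i1,j1) \<noteq> (i2,j2) \<and> (i1,j1) \<noteq> (i3,j3) \<and> (i2,j2) \<noteq> (i3,j3) \<longrightarrow>
        \<not> (\<exists>p. Lf a b c i1 j1 p = 0 \<and> Lf a b c i2 j2 p = 0 \<and> Lf a b c i3 j3 p = 0)"
    and i1: "i1 \<in> {1..N}" and j1: "j1 \<in> {1..Nn i1}" and i2: "i2 \<in> {1..N}" and j2: "j2 \<in> {1..Nn i2}"
    and i12: "i1 \<noteq> i2"
    and PZ: "Lf a b c i1 j1 P = 0" and PZ': "Lf a b c i2 j2 P = 0"
    and unr: "\<forall>i\<in>{1..N}. pr * b i - qr * a i \<noteq> 0"
    and rad: "\<forall>Q\<in>all_pts a b c N Nn. Q \<noteq> P \<longrightarrow>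
               cmod ((pr * fst Q + qr * snd Q) - (pr * fst P + qr * snd P)) > r"
    and rpos: "r > 0" and dpos: "\<delta> > 0"
    and cont: "continuous_on (cball 0 \<delta> \<times> {0..1}) (\<lambda>(t,\<theta>). \<Gamma> t \<theta>)"
    and circ: "\<forall>t\<in>cball 0 \<delta>. \<forall>\<theta>\<in>{0..1}.
              pr * fst (\<Gamma> t \<theta>) + qr * snd (\<Gamma> t \<theta>) = pr * fst P + qr * snd P + complex_of_real r * cis (2 * pi * \<theta>)
            \<and> Fprod a b c N Nn (\<Gamma> t \<theta>) = t"
    and loop: "\<forall>t\<in>cball 0 \<delta>. \<Gamma> t 0 = \<Gamma> t 1"
    and C1: "\<forall>t\<in>cball 0 \<delta> - {0}. (\<Gamma> t) C1_differentiable_on {0..1}"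
    and on0: "\<forall>\<theta>\<in>{0..1}. Lf a b c i1 j1 (\<Gamma> 0 \<theta>) = 0"
  shows "loopctx a b c (Sigma {1..N} (\<lambda>i. {1..Nn i})) pr qr r \<delta> \<Gamma> (i1,j1) (i2,j2) P"
proof -
  let ?I = "Sigma {1..N} (\<lambda>i. {1..Nn i})"
  let ?Z = "(i1,j1)" and ?Z' = "(i2,j2)"
  have "pr * b i1 - qr * a i1 \<noteq> 0" using unr i1 by blast
  then have d: "a (fst ?Z) * qr - b (fst ?Z) * pr \<noteq> 0" by (simp add: algebra_simps)
  have lamform: "lamf a b pr qr ?Z X = br a b i1 (fst X) / (a (fst ?Z) * qr - b (fst ?Z) * pr)" for X
    unfolding lamf_def br_def by simp
  show ?thesis
  proof (unfold_locales)
    show "finite ?I" by auto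
    show "?Z \<in> ?I" "?Z' \<in> ?I" using i1 j1 i2 j2 by auto
    show "?Z \<noteq> ?Z'" using i12 by simp
    show "\<delta> > 0" "r > 0" by (fact dpos, fact rpos)
    show "continuous_on (cball 0 \<delta> \<times> {0..1}) (\<lambda>(t,\<theta>). \<Gamma> t \<theta>)" by (fact cont)
    show "\<forall>t\<in>cball 0 \<delta>. \<forall>\<theta>\<in>{0..1}. pr * fst (\<Gamma> t \<theta>) + qr * snd (\<Gamma> t \<theta>)
                 = pr * fst P + qr * snd P + complex_of_real r * cis (2*pi*\<theta>)" using circ by auto
    show "\<forall>t\<in>cball 0 \<delta>. \<forall>\<theta>\<in>{0..1}. (\<Prod>X\<in>?I. LL a b c X (\<Gamma> t \<theta>)) = t"
      using circ by (auto simp: Fprod_Sigma)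
    show "\<forall>t\<in>cball 0 \<delta>. \<Gamma> t 0 = \<Gamma> t 1" by (fact loop)
    show "\<forall>t\<in>cball 0 \<delta> - {0}. \<Gamma> t C1_differentiable_on {0..1}" by (fact C1)
    show "\<forall>\<theta>\<in>{0..1}. LL a b c ?Z (\<Gamma> 0 \<theta>) = 0" using on0 by (simp add: LL_def)
    show "a (fst ?Z) * qr - b (fst ?Z) * pr \<noteq> 0" by (fact d)
    show "LL a b c ?Z P = 0" "LL a b c ?Z' P = 0" using PZ PZ' by (simp_all add: LL_def)
    show "lamf a b pr qr ?Z ?Z' \<noteq> 0" unfolding lamform using bracket i1 i2 i12 d by simp
    show "\<forall>X\<in>?I - {?Z,?Z'}. (lamf a b pr qr ?Z X = 0 \<and> LL a b c X P \<noteq> 0)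
                   \<or> (lamf a b pr qr ?Z X \<noteq> 0 \<and> r < cmod (LL a b c X P / lamf a b pr qr ?Z X))"
    proof
      fix X assume X: "X \<in> ?I - {?Z,?Z'}"
      obtain i' j' where Xe: "X = (i',j')" by (cases X)
      have i': "i' \<in> {1..N}" and j': "j' \<in> {1..Nn i'}" using X Xe by auto
      show "(lamf a b pr qr ?Z X = 0 \<and> LL a b c X P \<noteq> 0)
                   \<or> (lamf a b pr qr ?Z X \<noteq> 0 \<and> r < cmod (LL a b c X P / lamf a b pr qr ?Z X))"
      proof (cases "i' = i1")
        case True
        then have jj: "j' \<noteq> j1" using X Xe by auto
        have "LL a b c X P = LL a b c X P - LL a b c ?Z P" using PZ by (simp add: LL_def)
        also have "\<dots> = c i' j' - c i1 j1" using True Xe by (simp add: LL_def Lf_def)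
        finally have "LL a b c X P \<noteq> 0" using distinct_lines i1 j1 j' jj True by auto
        moreover have "lamf a b pr qr ?Z X = 0" unfolding lamform using True Xe by (simp add: br_def)
        ultimately show ?thesis by simp
      next
        case False
        define lm where "lm = lamf a b pr qr ?Z X"
        have lm0: "lm \<noteq> 0" unfolding lm_def lamform using bracket i1 i' False d Xe by simp
        define Q where "Q = Pt a b c i1 j1 i' j'"
        have brn: "br a b i1 i' \<noteq> 0" using bracket i1 i' False by auto
        have QZ: "Lf a b c i1 j1 Q = 0" and QX: "Lf a b c i' j' Q = 0"
          unfolding Q_def using Pt_zero[OF brn] by auto
        have Qin: "Q \<in> all_pts a b c N Nn" unfolding Q_def all_pts_def using i1 j1 i' j' False by blast
        have QP: "Q \<noteq> P"
        proof
          assume "Q = P"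
          then have "Lf a b c i' j' P = 0" using QX by simp
          moreover have "(i1,j1) \<noteq> (i2,j2)" "(i1,j1) \<noteq> (i',j')" "(i2,j2) \<noteq> (i',j')" using i12 X Xe by auto
          ultimately show False using no_triple i1 j1 i2 j2 i' j' PZ PZ' by blast
        qed
        have dec: "LL a b c X p = muf a b pr qr ?Z X * LL a b c ?Z p + lm * (pr * fst p + qr * snd p)
           + (c (fst X) (snd X) - muf a b pr qr ?Z X * c (fst ?Z) (snd ?Z))" for p
          using LL_decomp[of a ?Z qr b pr c X p] d unfolding muf_def lamf_def lm_def by simp
        define \<nu> where "\<nu> = c (fst X) (snd X) - muf a b pr qr ?Z X * c (fst ?Z) (snd ?Z)"
        have eP: "LL a b c X P = lm * (pr * fst P + qr * snd P) + \<nu>"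
          using dec[of P] PZ unfolding \<nu>_def by (simp add: LL_def)
        have eQ: "LL a b c X Q = lm * (pr * fst Q + qr * snd Q) + \<nu>"
          using dec[of Q] QZ unfolding \<nu>_def by (simp add: LL_def)
        have "LL a b c X P - LL a b c X Q = lm * ((pr * fst P + qr * snd P) - (pr * fst Q + qr * snd Q))"
          unfolding eP eQ by (simp add: algebra_simps)
        then have "LL a b c X P / lm = (pr * fst P + qr * snd P) - (pr * fst Q + qr * snd Q)"
          using QX Xe lm0 by (simp add: LL_def field_simps)
        moreover have "r < cmod ((pr * fst Q + qr * snd Q) - (pr * fst P + qr * snd P))"
          using rad Qin QP by auto
        ultimately have "r < cmod (LL a b c X P / lm)" by (simp add: norm_minus_commute)
        then show ?thesis using lm0 lm_def by simp
      qed
    qed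
  qed
qed


lemma entry_lim:
  assumes LC: "loopctx a b c (Sigma {1..N} (\<lambda>i. {1..Nn i})) pr qr r \<delta> \<Gamma> Z Z' P"
    and tg: "tg \<in> alpha_tags N Nn" and N2: "2 \<le> N" and Nn1: "\<forall>i\<in>{1..N}. Nn i \<ge> 1"
    and bracket: "\<forall>i\<in>{1..N}. \<forall>k\<in>{1..N}. i \<noteq> k \<longrightarrow> br a b i k \<noteq> 0"
  shows "((\<lambda>t. pairing (\<Gamma> t) (alpha_of a b c tg) / ln (cmod t)) \<longlongrightarrow> Mg Z Z' (tA tg) (tB tg) (tC tg) (tD tg)) (at 0)"
proof -
  interpret loopctx a b c "Sigma {1..N} (\<lambda>i. {1..Nn i})" pr qr r \<delta> \<Gamma> Z Z' P by (fact LC)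
  have "((\<lambda>t. pairing (\<Gamma> t) (\<lambda>p. tk a b tg * LL a b c (tA tg) p / LL a b c (tB tg) p,
                                      \<lambda>p. tk' a b tg * LL a b c (tC tg) p / LL a b c (tD tg) p) / ln (cmod t))
          \<longlongrightarrow> Mval (tA tg) (tB tg) (tC tg) (tD tg)) (at 0)"
    by (rule pairing_lim[OF tags_I[OF tg N2 Nn1] tk_nz[OF tg bracket]])
  then show ?thesis unfolding alpha_gen Mval_Mg .
qed

lemma Mg_swap: "Mg Z' Z A B C D = - Mg Z Z' A B C D"
  unfolding Mg_def by (simp add: algebra_simps)

theorem theorem6p4:
  fixes N :: nat and Nn :: "nat \<Rightarrow> nat"
    and a b :: "nat \<Rightarrow> complex" and c :: "nat \<Rightarrow> nat \<Rightarrow> complex"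
  assumes N2: "N \<ge> 2"
    and Nn1: "\<forall>i\<in>{1..N}. Nn i \<ge> 1"
    and nonconst: "\<forall>i\<in>{1..N}. a i \<noteq> 0 \<or> b i \<noteq> 0"
    and distinct_lines: "\<forall>i\<in>{1..N}. \<forall>j\<in>{1..Nn i}. \<forall>k\<in>{1..Nn i}. j \<noteq> k \<longrightarrow> c i j \<noteq> c i k"
    and bracket: "\<forall>i\<in>{1..N}. \<forall>k\<in>{1..N}. i \<noteq> k \<longrightarrow> br a b i k \<noteq> 0"
    and no_triple: "\<forall>i1\<in>{1..N}. \<forall>j1\<in>{1..Nn i1}. \<forall>i2\<in>{1..N}. \<forall>j2\<in>{1..Nn i2}.
        \<forall>i3\<in>{1..N}. \<forall>j3\<in>{1..Nn i3}.
        (i1,j1) \<noteq> (i2,j2) \<and> (i1,j1) \<noteq> (i3,j3) \<and> (i2,j2) \<noteq> (i3,j3) \<longrightarrow>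
        \<not> (\<exists>p. Lf a b c i1 j1 p = 0 \<and> Lf a b c i2 j2 p = 0 \<and> Lf a b c i3 j3 p = 0)"
  shows
    "\<forall>(pr::complex) (qr::complex) (r :: nat \<times> nat \<times> nat \<times> nat \<Rightarrow> real) (\<delta>::real)
        (\<Gamma> :: nat \<times> nat \<times> nat \<times> nat \<Rightarrow> complex \<Rightarrow> real \<Rightarrow> pt)
        (es :: nat \<Rightarrow> nat \<times> nat \<times> nat \<times> nat) (ea :: nat \<Rightarrow> atag).
      let \<pi> = (\<lambda>p::pt. pr * fst p + qr * snd p) in
      ( \<comment> \<open>new x-coordinate pi: unramified on X_0 away from intersection points, i.e.
           nonconstant on each line\<close>
        (\<forall>i\<in>{1..N}. pr * b i - qr * a i \<noteq> 0)
        \<comment> \<open>distinct intersection points have distinct x-coordinates\<close>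
      \<and> (\<forall>P\<in>all_pts a b c N Nn. \<forall>Q\<in>all_pts a b c N Nn. P \<noteq> Q \<longrightarrow> \<pi> P \<noteq> \<pi> Q)
      \<and> \<delta> > 0
      \<and> (\<forall>s\<in>S_idx N Nn. case s of (i,j,k,l) \<Rightarrow>
           \<comment> \<open>small circle gamma' around pi(s)\<close>
           r s > 0
         \<and> (\<forall>Q\<in>all_pts a b c N Nn. Q \<noteq> Pt a b c i j k l \<longrightarrow>
              cmod (\<pi> Q - \<pi> (Pt a b c i j k l)) > r s)
           \<comment> \<open>Gamma s t is a lift of gamma' into X_t, continuous in (t, theta)\<close>
         \<and> continuous_on (cball 0 \<delta> \<times> {0..1}) (\<lambda>(t,\<theta>). \<Gamma> s t \<theta>)
         \<and> (\<forall>t\<in>cball 0 \<delta>. \<forall>\<theta>\<in>{0..1}.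
              \<pi> (\<Gamma> s t \<theta>) = \<pi> (Pt a b c i j k l) + complex_of_real (r s) * cis (2 * pi * \<theta>)
            \<and> Fprod a b c N Nn (\<Gamma> s t \<theta>) = t)
         \<and> (\<forall>t\<in>cball 0 \<delta>. \<Gamma> s t 0 = \<Gamma> s t 1)
         \<and> (\<forall>t\<in>cball 0 \<delta> - {0}. (\<Gamma> s t) C1_differentiable_on {0..1})
           \<comment> \<open>at t = 0 it is the lift into a line L through s\<close>
         \<and> ((\<forall>\<theta>\<in>{0..1}. Lf a b c i j (\<Gamma> s 0 \<theta>) = 0)
            \<or> (\<forall>\<theta>\<in>{0..1}. Lf a b c k l (\<Gamma> s 0 \<theta>) = 0)))
      \<and> bij_betw es {..<genus N Nn} (S_idx N Nn)
      \<and> bij_betw ea {..<genus N Nn} (alpha_tags N Nn)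
      \<longrightarrow>
        ((\<lambda>t::complex. Determinant.det (mat (genus N Nn) (genus N Nn)
              (\<lambda>(u,v). pairing (\<Gamma> (es u) t) (alpha_of a b c (ea v))))
            / (ln (cmod t)) ^ genus N Nn) \<longlongrightarrow> 1) (at 0)
      \<or> ((\<lambda>t::complex. Determinant.det (mat (genus N Nn) (genus N Nn)
              (\<lambda>(u,v). pairing (\<Gamma> (es u) t) (alpha_of a b c (ea v))))
            / (ln (cmod t)) ^ genus N Nn) \<longlongrightarrow> -1) (at 0))"
proof (unfold Let_def, intro allI impI, goal_cases)
  case (1 pr qr r \<delta> \<Gamma> es ea)
  define g where "g = genus N Nn"
  have unr: "\<forall>i\<in>{1..N}. pr * b i - qr * a i \<noteq> 0" using 1 by blast
  have dpos: "\<delta> > 0" using 1 by blast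
  have Hs: "\<forall>s\<in>S_idx N Nn. case s of (i,j,k,l) \<Rightarrow>
           r s > 0
         \<and> (\<forall>Q\<in>all_pts a b c N Nn. Q \<noteq> Pt a b c i j k l \<longrightarrow>
              cmod ((pr * fst Q + qr * snd Q) - (pr * fst (Pt a b c i j k l) + qr * snd (Pt a b c i j k l))) > r s)
         \<and> continuous_on (cball 0 \<delta> \<times> {0..1}) (\<lambda>(t,\<theta>). \<Gamma> s t \<theta>)
         \<and> (\<forall>t\<in>cball 0 \<delta>. \<forall>\<theta>\<in>{0..1}.
              pr * fst (\<Gamma> s t \<theta>) + qr * snd (\<Gamma> s t \<theta>) = pr * fst (Pt a b c i j k l) + qr * snd (Pt a b c i j k l) + complex_of_real (r s) * cis (2 * pi * \<theta>)
            \<and> Fprod a b c N Nn (\<Gamma> s t \<theta>) = t)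
         \<and> (\<forall>t\<in>cball 0 \<delta>. \<Gamma> s t 0 = \<Gamma> s t 1)
         \<and> (\<forall>t\<in>cball 0 \<delta> - {0}. (\<Gamma> s t) C1_differentiable_on {0..1})
         \<and> ((\<forall>\<theta>\<in>{0..1}. Lf a b c i j (\<Gamma> s 0 \<theta>) = 0)
            \<or> (\<forall>\<theta>\<in>{0..1}. Lf a b c k l (\<Gamma> s 0 \<theta>) = 0))"
    using 1 by blast
  have esb: "bij_betw es {..<g} (S_idx N Nn)" and eab: "bij_betw ea {..<g} (alpha_tags N Nn)"
    using 1 g_def by blast+
  define ZZ where "ZZ s = (case s of (i,j,k,l) \<Rightarrow>
     if (\<forall>\<theta>\<in>{0..1}. Lf a b c i j (\<Gamma> s 0 \<theta>) = 0) then ((i,j),(k,l)) else ((k,l),(i,j)))" for s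
  define Ent where "Ent u v = Mg (fst (ZZ (es u))) (snd (ZZ (es u))) (tA (ea v)) (tB (ea v)) (tC (ea v)) (tD (ea v))" for u v
  have LIM: "((\<lambda>t. pairing (\<Gamma> (es u) t) (alpha_of a b c (ea v)) / ln (cmod t)) \<longlongrightarrow> Ent u v) (at 0)
        \<and> \<bar>Ent u v\<bar> = \<bar>M0 (es u) (ea v)\<bar>"
    if u: "u < g" and v: "v < g" for u v
  proof -
    have sS: "es u \<in> S_idx N Nn" using esb u by (auto simp: bij_betw_def)
    have tg: "ea v \<in> alpha_tags N Nn" using eab v by (auto simp: bij_betw_def)
    obtain i j k l where s: "es u = (i,j,k,l)" by (cases "es u") auto
    have idx: "1 \<le> i" "i < k" "k \<le> N" "1 \<le> j" "j \<le> Nn i" "1 \<le> l" "l \<le> Nn k"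
      using sS unfolding s S_idx_def by auto
    define P where "P = Pt a b c i j k l"
    have brn: "br a b i k \<noteq> 0" using bracket idx by auto
    have PZ: "Lf a b c i j P = 0" and PZ': "Lf a b c k l P = 0" unfolding P_def using Pt_zero[OF brn] by auto
    have hs: "r (es u) > 0
         \<and> (\<forall>Q\<in>all_pts a b c N Nn. Q \<noteq> P \<longrightarrow>
              cmod ((pr * fst Q + qr * snd Q) - (pr * fst P + qr * snd P)) > r (es u))
         \<and> continuous_on (cball 0 \<delta> \<times> {0..1}) (\<lambda>(t,\<theta>). \<Gamma> (es u) t \<theta>)
         \<and> (\<forall>t\<in>cball 0 \<delta>. \<forall>\<theta>\<in>{0..1}.
              pr * fst (\<Gamma> (es u) t \<theta>) + qr * snd (\<Gamma> (es u) t \<theta>) = pr * fst P + qr * snd P + complex_of_real (r (es u)) * cis (2 * pi * \<theta>)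
            \<and> Fprod a b c N Nn (\<Gamma> (es u) t \<theta>) = t)
         \<and> (\<forall>t\<in>cball 0 \<delta>. \<Gamma> (es u) t 0 = \<Gamma> (es u) t 1)
         \<and> (\<forall>t\<in>cball 0 \<delta> - {0}. (\<Gamma> (es u) t) C1_differentiable_on {0..1})
         \<and> ((\<forall>\<theta>\<in>{0..1}. Lf a b c i j (\<Gamma> (es u) 0 \<theta>) = 0)
            \<or> (\<forall>\<theta>\<in>{0..1}. Lf a b c k l (\<Gamma> (es u) 0 \<theta>) = 0))"
      using Hs sS unfolding P_def s by auto
    have M0e: "M0 (es u) (ea v) = Mg (i,j) (k,l) (tA (ea v)) (tB (ea v)) (tC (ea v)) (tD (ea v))"
      unfolding s by simp
    show ?thesis
    proof (cases "\<forall>\<theta>\<in>{0..1}. Lf a b c i j (\<Gamma> (es u) 0 \<theta>) = 0")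
      case True
      have LC: "loopctx a b c (Sigma {1..N} (\<lambda>i. {1..Nn i})) pr qr (r (es u)) \<delta> (\<Gamma> (es u)) (i,j) (k,l) P"
        by (rule inst[OF distinct_lines bracket no_triple _ _ _ _ _ PZ PZ' unr])
           (use idx hs True dpos in auto)
      have Z: "ZZ (es u) = ((i,j),(k,l))" unfolding ZZ_def using True s by simp
      show ?thesis using entry_lim[OF LC tg N2 Nn1 bracket] unfolding Ent_def Z M0e by simp
    next
      case False
      then have F2: "\<forall>\<theta>\<in>{0..1}. Lf a b c k l (\<Gamma> (es u) 0 \<theta>) = 0" using hs by blast
      have LC: "loopctx a b c (Sigma {1..N} (\<lambda>i. {1..Nn i})) pr qr (r (es u)) \<delta> (\<Gamma> (es u)) (k,l) (i,j) P"
        by (rule inst[OF distinct_lines bracket no_triple _ _ _ _ _ PZ' PZ unr])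
           (use idx hs F2 dpos in auto)
      have Z: "ZZ (es u) = ((k,l),(i,j))" unfolding ZZ_def using False s by auto
      show ?thesis using entry_lim[OF LC tg N2 Nn1 bracket] unfolding Ent_def Z M0e Mg_swap[of "(i,j)"] by simp
    qed
  qed
  have DL: "((\<lambda>t. Determinant.det (mat g g (\<lambda>(u,v). pairing (\<Gamma> (es u) t) (alpha_of a b c (ea v))))
              / (ln (cmod t)) ^ g) \<longlongrightarrow> Determinant.det (mat g g (\<lambda>(u,v). Ent u v))) (at 0)"
    by (rule det_lim) (use LIM in blast)
  have "\<bar>Determinant.det (mat g g (\<lambda>(u,v). Ent u v))\<bar> = 1"
    by (rule det_pm1[OF N2 Nn1 esb eab]) (use LIM in blast)
  then have "Determinant.det (mat g g (\<lambda>(u,v). Ent u v)) = 1 \<or> Determinant.det (mat g g (\<lambda>(u,v). Ent u v)) = -1"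
    by linarith
  then show ?case using DL unfolding g_def by auto
qed


end
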